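(* Let $\mathbb{K}$ be a non-Archimedean valued field with residue field $\mathfrak{r}$, and let $G$ be a discrete group. Set $R = \mathbb{F}_p$ if $\chi(\mathbb{K}) = p > 0$; $R = \mathbb{Q}$ if $\chi(\mathbb{K}) = \chi(\mathfrak{r}) = 0$; and $R = \mathbb{Z}$ if $\chi(\mathbb{K}) = 0$ and $\chi(\mathfrak{r}) = p > 0$. Let $n\ge 0$. If $H_n(G, R)$ is a finitely generated $R$-module, then the comparison map $c^n : H^n_b(G, \mathbb{K}) \to H^n(G, \mathbb{K})$ is surjective.
   Context: A non-Archimedean valued field is a field with an absolute value satisfying the ultrametric inequality; $\mathfrak{o}=\{|x|_\mathbb{K}\le1\}$, $\mathfrak{m}=\{|x|_\mathbb{K}<1\}$, residue field $\mathfrak{r}=\mathfrak{o}/\mathfrak{m}$, $\chi$ = characteristic. $H_n(G,R)$ is ordinary group homology with trivial coefficients. $\mathbb{K}$ is a trivial $G$-module. Bar resolution: $\overline{C}^0=\mathbb{K}$, $\overline{C}^n(G,\mathbb{K})$ = all maps $G^n\to\mathbb{K}$, $\overline{C}^n_b(G,\mathbb{K})$ = bounded such maps, with $\delta^nf(g_1,\dots,g_{n+1})=f(g_2,\dots,g_{n+1})+\sum_{i=1}^n(-1)^if(g_1,\dots,g_ig_{i+1},\dots,g_{n+1})+(-1)^{n+1}f(g_1,\dots,g_n)$. $H^\bullet(G,\mathbb{K})$ and $H^\bullet_b(G,\mathbb{K})$ are their cohomologies; the comparison map $c^n$ is induced by inclusion. *)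

theory Defs
  imports Complex_Main "HOL-Algebra.Group"
begin

definition nonarch_abs :: "('k::field \<Rightarrow> real) \<Rightarrow> bool" where
  "nonarch_abs av \<longleftrightarrow>
     (\<forall>x. 0 \<le> av x) \<and> (\<forall>x. av x = 0 \<longleftrightarrow> x = 0) \<and>
     (\<forall>x y. av (x * y) = av x * av y) \<and>
     (\<forall>x y. av (x + y) \<le> max (av x) (av y))"

text \<open>Characteristic of the residue field o/m: the generator of the kernel of
  Z -> o/m, i.e. the least n > 0 with n*1 in m (note n*1 is always in o), or 0.\<close>
definition res_char :: "('k::field \<Rightarrow> real) \<Rightarrow> nat" where
  "res_char av = (if \<exists>n>0. av (of_nat n :: 'k) < 1
                  then (LEAST n. n > 0 \<and> av (of_nat n :: 'k) < 1) else 0)"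

definition tuples :: "('g,'b) monoid_scheme \<Rightarrow> nat \<Rightarrow> 'g list set" where
  "tuples G m = {xs. length xs = m \<and> set xs \<subseteq> carrier G}"

definition face :: "('g,'b) monoid_scheme \<Rightarrow> nat \<Rightarrow> nat \<Rightarrow> 'g list \<Rightarrow> 'g list" where
  "face G m i xs =
     (if i = 0 then tl xs
      else if i = m then butlast xs
      else take (i - 1) xs @ [xs ! (i - 1) \<otimes>\<^bsub>G\<^esub> xs ! i] @ drop (i + 1) xs)"

definition cochain :: "('g,'b) monoid_scheme \<Rightarrow> nat \<Rightarrow> ('g list \<Rightarrow> 'k::field) \<Rightarrow> bool" where
  "cochain G n f \<longleftrightarrow> (\<forall>xs. xs \<notin> tuples G n \<longrightarrow> f xs = 0)"

definition bounded_cochain :: "('k::field \<Rightarrow> real) \<Rightarrow> ('g list \<Rightarrow> 'k) \<Rightarrow> bool" where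
  "bounded_cochain av f \<longleftrightarrow> (\<exists>B. \<forall>xs. av (f xs) \<le> B)"

definition cobdry :: "('g,'b) monoid_scheme \<Rightarrow> nat \<Rightarrow> ('g list \<Rightarrow> 'k::field) \<Rightarrow> 'g list \<Rightarrow> 'k" where
  "cobdry G n f xs =
     (if xs \<in> tuples G (Suc n)
      then (\<Sum>i\<in>{0..Suc n}. (-1) ^ i * f (face G (Suc n) i xs)) else 0)"

text \<open>Surjectivity of the comparison map c^n : H^n_b(G,K) -> H^n(G,K): every
  ordinary n-cocycle is cohomologous (in the ordinary complex) to a bounded cocycle.\<close>
definition comparison_surj :: "('k::field \<Rightarrow> real) \<Rightarrow> ('g,'b) monoid_scheme \<Rightarrow> nat \<Rightarrow> bool" where
  "comparison_surj av G n \<longleftrightarrow>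
     (\<forall>f::'g list \<Rightarrow> 'k. cochain G n f \<and> cobdry G n f = (\<lambda>_. 0) \<longrightarrow>
        (\<exists>b. cochain G n b \<and> bounded_cochain av b \<and> cobdry G n b = (\<lambda>_. 0) \<and>
             (if n = 0 then f = b
              else (\<exists>h. cochain G (n - 1) h \<and> (\<lambda>xs. f xs - b xs) = cobdry G (n - 1) h))))"

definition chain :: "('g,'b) monoid_scheme \<Rightarrow> nat \<Rightarrow> ('g list \<Rightarrow> 'r::comm_ring_1) \<Rightarrow> bool" where
  "chain G n c \<longleftrightarrow> finite {xs. c xs \<noteq> 0} \<and> {xs. c xs \<noteq> 0} \<subseteq> tuples G n"

definition bdry :: "('g,'b) monoid_scheme \<Rightarrow> nat \<Rightarrow> ('g list \<Rightarrow> 'r::comm_ring_1) \<Rightarrow> 'g list \<Rightarrow> 'r" where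
  "bdry G n c ys =
     (\<Sum>xs\<in>{xs. c xs \<noteq> 0}. c xs * (\<Sum>i\<in>{i. i \<le> n \<and> face G n i xs = ys}. (-1) ^ i))"

definition cycle :: "('g,'b) monoid_scheme \<Rightarrow> nat \<Rightarrow> ('g list \<Rightarrow> 'r::comm_ring_1) \<Rightarrow> bool" where
  "cycle G n z \<longleftrightarrow> chain G n z \<and> (n = 0 \<or> bdry G n z = (\<lambda>_. 0))"

text \<open>H_n(G,R) = Z_n / B_n is a finitely generated R-module: finitely many cycles
  generate all cycles modulo boundaries of (n+1)-chains.\<close>
definition homology_fg :: "'r::comm_ring_1 itself \<Rightarrow> ('g,'b) monoid_scheme \<Rightarrow> nat \<Rightarrow> bool" where
  "homology_fg _ G n \<longleftrightarrow>
     (\<exists>F::('g list \<Rightarrow> 'r) set. finite F \<and> (\<forall>z\<in>F. cycle G n z) \<and>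
        (\<forall>z. cycle G n z \<longrightarrow>
           (\<exists>a d. chain G (Suc n) d \<and>
              z = (\<lambda>xs. (\<Sum>w\<in>F. a w * w xs) + bdry G (Suc n) d xs))))"

end

theory Submission
  imports Defs "HOL-Computational_Algebra.Primes"
begin


lemma face_length:
  assumes "length xs = N" "i \<le> N" "N \<ge> 1"
  shows "length (face G N i xs) = N - 1"
  using assms by (auto simp: face_def)

lemma face_nth:
  fixes G :: "('g,'b) monoid_scheme"
  assumes "length xs = N" "i \<le> N" "l < N - 1"
  shows "face G N i xs ! l = (if i = 0 then xs ! (Suc l) else if Suc l < i then xs ! l
            else if Suc l = i then xs ! l \<otimes>\<^bsub>G\<^esub> xs ! (Suc l) else xs ! (Suc l))"
proof -
  consider "i = 0" | "i = N" "i \<noteq> 0" | "0 < i" "i < N" using assms(2) by linarith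
  then show ?thesis
  proof cases
    case 1 then show ?thesis using assms by (simp add: face_def nth_tl)
  next
    case 2
    have "Suc l < N" using assms by linarith
    then show ?thesis using 2 assms by (simp add: face_def nth_butlast)
  next
    case 3
    have "face G N i xs = take (i - 1) xs @ [xs ! (i - 1) \<otimes>\<^bsub>G\<^esub> xs ! i] @ drop (i + 1) xs"
      using 3 by (simp add: face_def)
    then show ?thesis using 3 assms
      by (auto simp: nth_append min_def)
  qed
qed

lemma tuples_face:
  assumes "group G" "xs \<in> tuples G (Suc m)" "i \<le> Suc m"
  shows "face G (Suc m) i xs \<in> tuples G m"
proof -
  interpret group G by fact
  have len: "length xs = Suc m" and sub: "set xs \<subseteq> carrier G" using assms by (auto simp: tuples_def)
  have L: "length (face G (Suc m) i xs) = m" using face_length[OF len assms(3)] by simp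
  have "face G (Suc m) i xs ! l \<in> carrier G" if "l < m" for l
  proof -
    have a: "xs ! l \<in> carrier G" "xs ! Suc l \<in> carrier G" using sub that len nth_mem[of l xs] nth_mem[of "Suc l" xs] by auto
    show ?thesis using face_nth[OF len assms(3), of l G] that a by auto
  qed
  then have "set (face G (Suc m) i xs) \<subseteq> carrier G" using L by (auto simp: set_conv_nth)
  then show ?thesis using L by (simp add: tuples_def)
qed

lemma simplicial:
  assumes "group G" "xs \<in> tuples G (Suc (Suc k))" "i < j" "j \<le> Suc (Suc k)"
  shows "face G (Suc k) i (face G (Suc (Suc k)) j xs) = face G (Suc k) (j - 1) (face G (Suc (Suc k)) i xs)"
proof -
  interpret group G by fact
  have len: "length xs = Suc (Suc k)" and sub: "set xs \<subseteq> carrier G" using assms by (auto simp: tuples_def)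
  have c: "xs ! l \<in> carrier G" if "l < Suc (Suc k)" for l using sub that len nth_mem[of l xs] by auto
  have Lj: "length (face G (Suc (Suc k)) j xs) = Suc k" using face_length[OF len assms(4)] by simp
  have Li: "length (face G (Suc (Suc k)) i xs) = Suc k" using face_length[OF len, of i] assms by simp
  show ?thesis
  proof (rule nth_equalityI)
    show "length (face G (Suc k) i (face G (Suc (Suc k)) j xs)) = length (face G (Suc k) (j - 1) (face G (Suc (Suc k)) i xs))"
      using face_length[OF Lj, of i G] face_length[OF Li, of "j-1" G] assms by simp
  next
    fix l assume "l < length (face G (Suc k) i (face G (Suc (Suc k)) j xs))"
    then have l: "l < k" using face_length[OF Lj, of i G] assms by simp
    have e1: "face G (Suc k) i (face G (Suc (Suc k)) j xs) ! l = (if i = 0 then (face G (Suc (Suc k)) j xs) ! (Suc l) else if Suc l < i then (face G (Suc (Suc k)) j xs) ! l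
            else if Suc l = i then (face G (Suc (Suc k)) j xs) ! l \<otimes>\<^bsub>G\<^esub> (face G (Suc (Suc k)) j xs) ! (Suc l) else (face G (Suc (Suc k)) j xs) ! (Suc l))"
      using face_nth[OF Lj, where i=i and l=l and G=G] assms l by simp
    have e2: "face G (Suc k) (j-1) (face G (Suc (Suc k)) i xs) ! l = (if j - 1 = 0 then (face G (Suc (Suc k)) i xs) ! (Suc l) else if Suc l < j - 1 then (face G (Suc (Suc k)) i xs) ! l
            else if Suc l = j - 1 then (face G (Suc (Suc k)) i xs) ! l \<otimes>\<^bsub>G\<^esub> (face G (Suc (Suc k)) i xs) ! (Suc l) else (face G (Suc (Suc k)) i xs) ! (Suc l))"
      using face_nth[OF Li, where i="j-1" and l=l and G=G] assms l by simp
    have fj: "\<And>p. p < Suc k \<Longrightarrow> face G (Suc (Suc k)) j xs ! p = (if j = 0 then xs ! (Suc p) else if Suc p < j then xs ! p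
            else if Suc p = j then xs ! p \<otimes>\<^bsub>G\<^esub> xs ! (Suc p) else xs ! (Suc p))"
      using face_nth[OF len assms(4), where G=G] by simp
    have fi: "\<And>p. p < Suc k \<Longrightarrow> face G (Suc (Suc k)) i xs ! p = (if i = 0 then xs ! (Suc p) else if Suc p < i then xs ! p
            else if Suc p = i then xs ! p \<otimes>\<^bsub>G\<^esub> xs ! (Suc p) else xs ! (Suc p))"
      using face_nth[OF len, where G=G and i=i] assms by simp
    have cl: "xs ! l \<in> carrier G" "xs ! Suc l \<in> carrier G" "xs ! Suc (Suc l) \<in> carrier G" using c l by auto
    show "face G (Suc k) i (face G (Suc (Suc k)) j xs) ! l = face G (Suc k) (j - 1) (face G (Suc (Suc k)) i xs) ! l"
    proof -
      obtain j' where jj: "j = Suc j'" using assms(3) by (cases j) auto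
      have ij: "i \<le> j'" "j' \<le> Suc k" using assms jj by auto
      consider "Suc l < i" | "Suc l = i" "Suc l < j'" | "Suc l = i" "Suc l = j'" | "i < Suc l" "Suc l < j'"
         | "i < Suc l" "Suc l = j'" | "i < Suc l" "j' < Suc l" using ij by linarith
      then show ?thesis
      proof cases
        case 3
        have q: "l < Suc k" "Suc l < Suc k" "i = Suc l" "j = Suc (Suc l)" using l 3 jj by auto
        have a1: "face G (Suc (Suc k)) j xs ! l = xs ! l" using fj[OF q(1)] q by simp
        have a2: "face G (Suc (Suc k)) j xs ! Suc l = xs ! Suc l \<otimes>\<^bsub>G\<^esub> xs ! Suc (Suc l)" using fj[OF q(2)] q by simp
        have a3: "face G (Suc (Suc k)) i xs ! l = xs ! l \<otimes>\<^bsub>G\<^esub> xs ! Suc l" using fi[OF q(1)] q by simp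
        have a4: "face G (Suc (Suc k)) i xs ! Suc l = xs ! Suc (Suc l)" using fi[OF q(2)] q by simp
        show ?thesis unfolding e1 e2 a1 a2 a3 a4 using q cl by (simp add: m_assoc)
      qed (unfold e1 e2, use l jj cl ij fi[of l] fi[of "Suc l"] fj[of l] fj[of "Suc l"] in \<open>auto\<close>)
    qed
  qed
qed



lemma cobdry_cobdry:
  fixes \<phi> :: "'g list \<Rightarrow> 'k::field"
  assumes G: "group G"
  shows "cobdry G (Suc k) (cobdry G k \<phi>) xs = 0"
proof (cases "xs \<in> tuples G (Suc (Suc k))")
  case False then show ?thesis by (simp add: cobdry_def)
next
  case True
  define t where "t = (\<lambda>(j::nat,i::nat). (-1::'k)^j * ((-1)^i * \<phi> (face G (Suc k) i (face G (Suc (Suc k)) j xs))))"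
  define S where "S = {0..Suc (Suc k)} \<times> {0..Suc k}"
  define P1 where "P1 = {p\<in>S. snd p < fst p}"
  define P2 where "P2 = {p\<in>S. fst p \<le> snd p}"
  have "cobdry G (Suc k) (cobdry G k \<phi>) xs = (\<Sum>j\<in>{0..Suc (Suc k)}. (-1)^j * cobdry G k \<phi> (face G (Suc (Suc k)) j xs))"
    using True by (simp add: cobdry_def)
  also have "\<dots> = (\<Sum>j\<in>{0..Suc (Suc k)}. \<Sum>i\<in>{0..Suc k}. t (j,i))"
  proof (rule sum.cong[OF refl])
    fix j assume "j \<in> {0..Suc (Suc k)}"
    then have "face G (Suc (Suc k)) j xs \<in> tuples G (Suc k)" using tuples_face[OF G True] by simp
    then have e: "cobdry G k \<phi> (face G (Suc (Suc k)) j xs) = (\<Sum>i\<in>{0..Suc k}. (-1)^i * \<phi> (face G (Suc k) i (face G (Suc (Suc k)) j xs)))"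
      by (simp only: cobdry_def if_True)
    show "(-1)^j * cobdry G k \<phi> (face G (Suc (Suc k)) j xs) = (\<Sum>i\<in>{0..Suc k}. t (j,i))"
      by (simp only: e sum_distrib_left t_def case_prod_conv)
  qed
  also have "\<dots> = sum t S" unfolding S_def sum.cartesian_product case_prod_eta ..
  also have "\<dots> = sum t P1 + sum t P2"
  proof -
    have "S = P1 \<union> P2" "P1 \<inter> P2 = {}" unfolding P1_def P2_def by auto
    moreover have "finite S" unfolding S_def by simp
    ultimately show ?thesis by (metis finite_Un sum.union_disjoint)
  qed
  also have "sum t P1 = sum (\<lambda>q. - t q) P2"
  proof (rule sum.reindex_bij_witness[where j = "\<lambda>(j,i). (i, j - 1)" and i = "\<lambda>(a,b). (Suc b, a)"])
    fix p assume "p \<in> P1"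
    then obtain j i where p: "p = (j,i)" "i < j" "j \<le> Suc (Suc k)" unfolding P1_def S_def by auto
    have sim: "face G (Suc k) i (face G (Suc (Suc k)) j xs) = face G (Suc k) (j - 1) (face G (Suc (Suc k)) i xs)"
      using simplicial[OF G True p(2,3)] .
    obtain j' where j': "j = Suc j'" using p by (cases j) auto
    show "(\<lambda>(a,b). (Suc b, a)) ((\<lambda>(j,i). (i, j - 1)) p) = p" using p j' by simp
    show "(\<lambda>(j,i). (i, j - 1)) p \<in> P2" using p j' unfolding P2_def S_def by auto
    show "- t ((\<lambda>(j,i). (i, j - 1)) p) = t p" using p j' sim by (simp add: t_def)
  next
    fix q assume "q \<in> P2"
    then obtain a b where q: "q = (a,b)" "a \<le> b" "b \<le> Suc k" unfolding P2_def S_def by auto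
    show "(\<lambda>(j,i). (i, j - 1)) ((\<lambda>(a,b). (Suc b, a)) q) = q" using q by simp
    show "(\<lambda>(a,b). (Suc b, a)) q \<in> P1" using q unfolding P1_def S_def by auto
  qed
  also have "sum (\<lambda>q. - t q) P2 + sum t P2 = 0" by (simp add: sum_negf)
  finally show ?thesis .
qed



definition rhom :: "('r::comm_ring_1 \<Rightarrow> 'k::comm_ring_1) \<Rightarrow> bool" where
  "rhom \<iota> \<longleftrightarrow> (\<forall>a b. \<iota> (a + b) = \<iota> a + \<iota> b) \<and> (\<forall>a b. \<iota> (a * b) = \<iota> a * \<iota> b) \<and> \<iota> 1 = 1"

lemma rhom_add: "rhom \<iota> \<Longrightarrow> \<iota> (a + b) = \<iota> a + \<iota> b" by (simp add: rhom_def)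
lemma rhom_mult: "rhom \<iota> \<Longrightarrow> \<iota> (a * b) = \<iota> a * \<iota> b" by (simp add: rhom_def)
lemma rhom_one: "rhom \<iota> \<Longrightarrow> \<iota> 1 = 1" by (simp add: rhom_def)
lemma rhom_zero: "rhom \<iota> \<Longrightarrow> \<iota> 0 = 0"
  using rhom_add[of \<iota> 0 0] by simp
lemma rhom_uminus: "rhom \<iota> \<Longrightarrow> \<iota> (- a) = - \<iota> a"
  using rhom_add[of \<iota> a "-a"] rhom_zero[of \<iota>] by (simp add: eq_neg_iff_add_eq_0 add.commute)
lemma rhom_diff: "rhom \<iota> \<Longrightarrow> \<iota> (a - b) = \<iota> a - \<iota> b"
  using rhom_add[of \<iota> a "-b"] rhom_uminus[of \<iota> b] by simp
lemma rhom_sum: "rhom \<iota> \<Longrightarrow> \<iota> (sum f A) = (\<Sum>x\<in>A. \<iota> (f x))"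
  by (induction A rule: infinite_finite_induct) (auto simp: rhom_zero rhom_add)
lemma rhom_power: "rhom \<iota> \<Longrightarrow> \<iota> (a ^ n) = \<iota> a ^ n"
  by (induction n) (auto simp: rhom_one rhom_mult)
lemma rhom_m1pow: "rhom \<iota> \<Longrightarrow> \<iota> ((-1) ^ n) = (-1) ^ n"
  by (simp add: rhom_power rhom_uminus rhom_one)

definition pair :: "('r::comm_ring_1 \<Rightarrow> 'k::comm_ring_1) \<Rightarrow> ('x \<Rightarrow> 'k) \<Rightarrow> ('x \<Rightarrow> 'r) \<Rightarrow> 'k" where
  "pair \<iota> \<phi> c = (\<Sum>x\<in>{x. c x \<noteq> 0}. \<iota> (c x) * \<phi> x)"

definition lin :: "'a set \<Rightarrow> ('a \<Rightarrow> 'r::comm_ring_1) \<Rightarrow> ('a \<Rightarrow> 'x \<Rightarrow> 'r) \<Rightarrow> 'x \<Rightarrow> 'r" where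
  "lin A m V = (\<lambda>x. \<Sum>a\<in>A. m a * V a x)"

lemma pair_superset:
  assumes "rhom \<iota>" "finite S" "{x. c x \<noteq> 0} \<subseteq> S"
  shows "pair \<iota> \<phi> c = (\<Sum>x\<in>S. \<iota> (c x) * \<phi> x)"
  unfolding pair_def using assms by (intro sum.mono_neutral_left) (auto simp: rhom_zero)

lemma fin_add: "finite {x. c x \<noteq> 0} \<Longrightarrow> finite {x. c' x \<noteq> 0} \<Longrightarrow> finite {x. (c x + c' x :: 'r::comm_ring_1) \<noteq> 0}"
  by (rule finite_subset[of _ "{x. c x \<noteq> 0} \<union> {x. c' x \<noteq> 0}"]) auto
lemma fin_diff: "finite {x. c x \<noteq> 0} \<Longrightarrow> finite {x. c' x \<noteq> 0} \<Longrightarrow> finite {x. (c x - c' x :: 'r::comm_ring_1) \<noteq> 0}"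
  by (rule finite_subset[of _ "{x. c x \<noteq> 0} \<union> {x. c' x \<noteq> 0}"]) auto
lemma fin_scale: "finite {x. c x \<noteq> 0} \<Longrightarrow> finite {x. (r * c x :: 'r::comm_ring_1) \<noteq> 0}"
  by (rule finite_subset[of _ "{x. c x \<noteq> 0}"]) auto
lemma fin_lin: "finite A \<Longrightarrow> (\<And>a. a \<in> A \<Longrightarrow> finite {x. V a x \<noteq> 0}) \<Longrightarrow> finite {x. lin A m V x \<noteq> 0}"
  unfolding lin_def
  apply (rule finite_subset[of _ "\<Union>a\<in>A. {x. V a x \<noteq> 0}"])
   apply auto
  by (metis (no_types, lifting) mult_zero_right sum.neutral)

lemma pair_add:
  assumes "rhom \<iota>" "finite {x. c x \<noteq> 0}" "finite {x. c' x \<noteq> 0}"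
  shows "pair \<iota> \<phi> (\<lambda>x. c x + c' x) = pair \<iota> \<phi> c + pair \<iota> \<phi> c'"
proof -
  let ?S = "{x. c x \<noteq> 0} \<union> {x. c' x \<noteq> 0}"
  have "pair \<iota> \<phi> (\<lambda>x. c x + c' x) = (\<Sum>x\<in>?S. \<iota> (c x + c' x) * \<phi> x)"
    using assms by (intro pair_superset) auto
  also have "\<dots> = (\<Sum>x\<in>?S. \<iota> (c x) * \<phi> x) + (\<Sum>x\<in>?S. \<iota> (c' x) * \<phi> x)"
    using assms(1) by (simp add: rhom_add distrib_right sum.distrib)
  also have "\<dots> = pair \<iota> \<phi> c + pair \<iota> \<phi> c'"
  proof -
    have "pair \<iota> \<phi> c = (\<Sum>x\<in>?S. \<iota> (c x) * \<phi> x)" using assms by (intro pair_superset) auto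
    moreover have "pair \<iota> \<phi> c' = (\<Sum>x\<in>?S. \<iota> (c' x) * \<phi> x)" using assms by (intro pair_superset) auto
    ultimately show ?thesis by simp
  qed
  finally show ?thesis .
qed

lemma pair_scale:
  assumes "rhom \<iota>" "finite {x. c x \<noteq> 0}"
  shows "pair \<iota> \<phi> (\<lambda>x. r * c x) = \<iota> r * pair \<iota> \<phi> c"
proof -
  have "pair \<iota> \<phi> (\<lambda>x. r * c x) = (\<Sum>x\<in>{x. c x \<noteq> 0}. \<iota> (r * c x) * \<phi> x)"
    using assms by (intro pair_superset) auto
  also have "\<dots> = \<iota> r * pair \<iota> \<phi> c"
    using assms(1) by (simp add: rhom_mult pair_def sum_distrib_left mult.assoc)
  finally show ?thesis .
qed

lemma pair_zero: "pair \<iota> \<phi> (\<lambda>_. 0) = 0" by (simp add: pair_def)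

lemma pair_diff:
  assumes "rhom \<iota>" "finite {x. c x \<noteq> 0}" "finite {x. c' x \<noteq> 0}"
  shows "pair \<iota> \<phi> (\<lambda>x. c x - c' x) = pair \<iota> \<phi> c - pair \<iota> \<phi> c'"
proof -
  have e: "(\<lambda>x. c x - c' x) = (\<lambda>x. c x + (-1) * c' x)" by simp
  have "pair \<iota> \<phi> (\<lambda>x. c x + (-1) * c' x) = pair \<iota> \<phi> c + pair \<iota> \<phi> (\<lambda>x. (-1) * c' x)"
    by (rule pair_add[OF assms(1,2) fin_scale[OF assms(3)]])
  also have "pair \<iota> \<phi> (\<lambda>x. (-1) * c' x) = \<iota> (-1) * pair \<iota> \<phi> c'"
    by (rule pair_scale[OF assms(1,3)])
  finally have "pair \<iota> \<phi> (\<lambda>x. c x - c' x) = pair \<iota> \<phi> c + \<iota> (-1) * pair \<iota> \<phi> c'" unfolding e .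
  moreover have "\<iota> (-1) = -1" using rhom_uminus[OF assms(1), of 1] rhom_one[OF assms(1)] by simp
  ultimately show ?thesis by simp
qed

lemma pair_lin:
  assumes "rhom \<iota>" "finite A" "\<And>a. a \<in> A \<Longrightarrow> finite {x. V a x \<noteq> 0}"
  shows "pair \<iota> \<phi> (lin A m V) = (\<Sum>a\<in>A. \<iota> (m a) * pair \<iota> \<phi> (V a))"
  using assms(2,3)
proof (induction A rule: finite_induct)
  case empty then show ?case by (simp add: lin_def pair_zero)
next
  case (insert a A)
  have "lin (insert a A) m V = (\<lambda>x. m a * V a x + lin A m V x)"
    using insert by (simp add: lin_def)
  then show ?case using insert assms(1)
    by (simp add: pair_add pair_scale fin_scale fin_lin)
qed

lemma lin_insert: "finite A \<Longrightarrow> a \<notin> A \<Longrightarrow> lin (insert a A) m V = (\<lambda>x. m a * V a x + lin A m V x)"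
  by (simp add: lin_def)

lemma lin_ext:
  assumes "finite A'" "A \<subseteq> A'"
  shows "lin A m V = lin A' (\<lambda>a. if a \<in> A then m a else 0) V"
  unfolding lin_def using assms
  by (intro ext) (auto intro!: sum.mono_neutral_cong_left)

lemma lin_add: "lin A m V x + lin A m' V x = lin A (\<lambda>a. m a + m' a) V x"
  by (simp add: lin_def sum.distrib distrib_right)
lemma lin_diff: "lin A m V x - lin A m' V x = lin A (\<lambda>a. m a - m' a) V x"
  by (simp add: lin_def sum_subtractf left_diff_distrib)
lemma lin_scale: "r * lin A m V x = lin A (\<lambda>a. r * m a) V x"
  by (simp add: lin_def sum_distrib_left mult.assoc)
lemma lin_cong: "(\<And>a. a \<in> A \<Longrightarrow> m a * V a x = m' a * V' a x) \<Longrightarrow> lin A m V x = lin A m' V' x"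
  by (simp add: lin_def)



definition NN :: "('g,'b) monoid_scheme \<Rightarrow> nat \<Rightarrow> 'g list \<Rightarrow> 'g list \<Rightarrow> 'r::comm_ring_1" where
  "NN G n xs ys = (\<Sum>i\<in>{i. i \<le> n \<and> face G n i xs = ys}. (-1) ^ i)"

lemma bdry_superset:
  assumes "finite S" "{x. c x \<noteq> 0} \<subseteq> S"
  shows "bdry G n c ys = (\<Sum>xs\<in>S. c xs * NN G n xs ys)"
  unfolding bdry_def NN_def using assms by (intro sum.mono_neutral_left) auto

lemma bdry_add:
  assumes "finite {x. c x \<noteq> 0}" "finite {x. c' x \<noteq> 0}"
  shows "bdry G n (\<lambda>x. c x + c' x) ys = bdry G n c ys + bdry G n c' ys"
proof -
  let ?S = "{x. c x \<noteq> 0} \<union> {x. c' x \<noteq> 0}"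
  have "bdry G n (\<lambda>x. c x + c' x) ys = (\<Sum>xs\<in>?S. (c xs + c' xs) * NN G n xs ys)"
    using assms by (intro bdry_superset) auto
  moreover have "bdry G n c ys = (\<Sum>xs\<in>?S. c xs * NN G n xs ys)" using assms by (intro bdry_superset) auto
  moreover have "bdry G n c' ys = (\<Sum>xs\<in>?S. c' xs * NN G n xs ys)" using assms by (intro bdry_superset) auto
  ultimately show ?thesis by (simp add: distrib_right sum.distrib)
qed

lemma bdry_scale:
  assumes "finite {x. c x \<noteq> 0}"
  shows "bdry G n (\<lambda>x. r * c x) ys = r * bdry G n c ys"
proof -
  have "bdry G n (\<lambda>x. r * c x) ys = (\<Sum>xs\<in>{x. c x \<noteq> 0}. (r * c xs) * NN G n xs ys)"
    using assms by (intro bdry_superset) auto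
  moreover have "bdry G n c ys = (\<Sum>xs\<in>{x. c x \<noteq> 0}. c xs * NN G n xs ys)" using assms by (intro bdry_superset) auto
  ultimately show ?thesis by (simp add: sum_distrib_left mult.assoc)
qed

lemma bdry_zero: "bdry G n (\<lambda>_. 0) ys = 0" by (simp add: bdry_def)

lemma bdry_diff:
  assumes "finite {x. c x \<noteq> 0}" "finite {x. c' x \<noteq> 0}"
  shows "bdry G n (\<lambda>x. c x - c' x) ys = bdry G n c ys - bdry G n c' ys"
proof -
  have e: "(\<lambda>x. c x - c' x) = (\<lambda>x. c x + (-1) * c' x)" by simp
  have "bdry G n (\<lambda>x. c x + (-1) * c' x) ys = bdry G n c ys + bdry G n (\<lambda>x. (-1) * c' x) ys"
    by (rule bdry_add[OF assms(1) fin_scale[OF assms(2)]])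
  also have "bdry G n (\<lambda>x. (-1) * c' x) ys = (-1) * bdry G n c' ys" by (rule bdry_scale[OF assms(2)])
  finally show ?thesis unfolding e by simp
qed

lemma bdry_lin:
  assumes "finite A" "\<And>a. a \<in> A \<Longrightarrow> finite {x. V a x \<noteq> 0}"
  shows "bdry G n (lin A m V) ys = lin A m (\<lambda>a. bdry G n (V a)) ys"
  using assms
proof (induction A rule: finite_induct)
  case empty then show ?case by (simp add: lin_def bdry_zero)
next
  case (insert a A)
  have e: "lin (insert a A) m V = (\<lambda>x. m a * V a x + lin A m V x)"
    using insert by (simp add: lin_def)
  have f1: "finite {x. m a * V a x \<noteq> 0}" using insert fin_scale by auto
  have f2: "finite {x. lin A m V x \<noteq> 0}" using insert by (intro fin_lin) auto
  have "bdry G n (lin (insert a A) m V) ys = bdry G n (\<lambda>x. m a * V a x) ys + bdry G n (lin A m V) ys"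
    unfolding e by (rule bdry_add[OF f1 f2])
  also have "bdry G n (\<lambda>x. m a * V a x) ys = m a * bdry G n (V a) ys"
    using insert by (intro bdry_scale) auto
  also have "bdry G n (lin A m V) ys = lin A m (\<lambda>a. bdry G n (V a)) ys" using insert by auto
  finally show ?case using insert by (simp add: lin_def)
qed

lemma bdry_supp:
  fixes c :: "'g list \<Rightarrow> 'r::comm_ring_1"
  assumes "finite {x. c x \<noteq> 0}"
  shows "{ys. bdry G (Suc k) c ys \<noteq> 0} \<subseteq> (\<lambda>(xs,i). face G (Suc k) i xs) ` ({x. c x \<noteq> 0} \<times> {0..Suc k})"
proof (rule subsetI, rule ccontr)
  fix ys assume A: "ys \<in> {ys. bdry G (Suc k) c ys \<noteq> 0}"
    and B: "ys \<notin> (\<lambda>(xs,i). face G (Suc k) i xs) ` ({x. c x \<noteq> 0} \<times> {0..Suc k})"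
  have E: "{i. i \<le> Suc k \<and> face G (Suc k) i xs = ys} = {}" if xs: "xs \<in> {x. c x \<noteq> 0}" for xs
  proof (rule equals0I)
    fix i assume i: "i \<in> {i. i \<le> Suc k \<and> face G (Suc k) i xs = ys}"
    have "ys \<in> (\<lambda>(xs,i). face G (Suc k) i xs) ` ({x. c x \<noteq> 0} \<times> {0..Suc k})"
      by (rule image_eqI[where x="(xs,i)"]) (use xs i in auto)
    with B show False by blast
  qed
  have "bdry G (Suc k) c ys = 0" unfolding bdry_def
  proof (rule sum.neutral, rule ballI)
    fix xs assume "xs \<in> {x. c x \<noteq> 0}"
    then show "c xs * (\<Sum>i\<in>{i. i \<le> Suc k \<and> face G (Suc k) i xs = ys}. (-1) ^ i) = 0"
      using E by (simp only: sum.empty mult_zero_right)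
  qed
  with A show False by simp
qed

lemma chain_bdry:
  assumes G: "group G" and c: "chain G (Suc k) c"
  shows "chain G k (bdry G (Suc k) c)"
proof -
  have fin: "finite {x. c x \<noteq> 0}" using c by (simp add: chain_def)
  have "(\<lambda>(xs,i). face G (Suc k) i xs) ` ({x. c x \<noteq> 0} \<times> {0..Suc k}) \<subseteq> tuples G k"
    using c tuples_face[OF G] by (auto simp: chain_def)
  moreover have "finite ((\<lambda>(xs,i). face G (Suc k) i xs) ` ({x. c x \<noteq> 0} \<times> {0..Suc k}))"
    using fin by simp
  ultimately show ?thesis using bdry_supp[OF fin, of G k] unfolding chain_def
    by (meson finite_subset subset_trans)
qed

lemma chain_fin: "chain G n c \<Longrightarrow> finite {x. c x \<noteq> 0}" by (simp add: chain_def)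

lemma supp_add_sub: "{x. c x + c' x \<noteq> 0} \<subseteq> {x. c x \<noteq> (0::'r::comm_ring_1)} \<union> {x. c' x \<noteq> 0}" by auto
lemma supp_diff_sub: "{x. c x - c' x \<noteq> 0} \<subseteq> {x. c x \<noteq> (0::'r::comm_ring_1)} \<union> {x. c' x \<noteq> 0}" by auto
lemma supp_scale_sub: "{x. r * c x \<noteq> 0} \<subseteq> {x. c x \<noteq> (0::'r::comm_ring_1)}" by auto

lemma chain_add: "chain G n c \<Longrightarrow> chain G n c' \<Longrightarrow> chain G n (\<lambda>x. c x + c' x)"
  unfolding chain_def using fin_add[of c c'] supp_add_sub[of c c'] by blast
lemma chain_scale: "chain G n c \<Longrightarrow> chain G n (\<lambda>x. r * c x)"
  unfolding chain_def using fin_scale[of c r] supp_scale_sub[of r c] by blast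
lemma chain_diff: "chain G n c \<Longrightarrow> chain G n c' \<Longrightarrow> chain G n (\<lambda>x. c x - c' x)"
  unfolding chain_def using fin_diff[of c c'] supp_diff_sub[of c c'] by blast
lemma chain_zero: "chain G n (\<lambda>_. 0)" by (simp add: chain_def)
lemma chain_lin: "finite A \<Longrightarrow> (\<And>a. a \<in> A \<Longrightarrow> chain G n (V a)) \<Longrightarrow> chain G n (lin A m V)"
proof (induction A rule: finite_induct)
  case empty then show ?case by (simp add: lin_def chain_zero)
next
  case (insert a A)
  have "lin (insert a A) m V = (\<lambda>x. m a * V a x + lin A m V x)"
    using insert by (simp add: lin_def)
  then show ?case using insert chain_add[OF chain_scale[of G n "V a" "m a"], of "lin A m V"] by simp
qed

lemma pair_bdry:
  assumes G: "group G" and i: "rhom \<iota>" and c: "chain G (Suc k) c"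
  shows "pair \<iota> \<phi> (bdry G (Suc k) c) = pair \<iota> (cobdry G k \<phi>) c"
proof -
  define Sc where "Sc = {x. c x \<noteq> 0}"
  have fin: "finite Sc" using c by (simp add: chain_def Sc_def)
  define Y where "Y = (\<lambda>(xs,i). face G (Suc k) i xs) ` (Sc \<times> {0..Suc k})"
  have finY: "finite Y" using fin by (simp add: Y_def)
  have sub: "{ys. bdry G (Suc k) c ys \<noteq> 0} \<subseteq> Y" unfolding Y_def Sc_def
    by (rule bdry_supp) (use fin in \<open>simp add: Sc_def\<close>)
  have "pair \<iota> \<phi> (bdry G (Suc k) c) = (\<Sum>ys\<in>Y. \<iota> (bdry G (Suc k) c ys) * \<phi> ys)"
    by (rule pair_superset[OF i finY sub])
  also have "\<dots> = (\<Sum>ys\<in>Y. \<Sum>xs\<in>Sc. \<iota> (c xs) * (\<iota> (NN G (Suc k) xs ys) * \<phi> ys))"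
  proof (rule sum.cong[OF refl])
    fix ys
    have "bdry G (Suc k) c ys = (\<Sum>xs\<in>Sc. c xs * NN G (Suc k) xs ys)"
      by (rule bdry_superset[OF fin]) (simp add: Sc_def)
    then show "\<iota> (bdry G (Suc k) c ys) * \<phi> ys = (\<Sum>xs\<in>Sc. \<iota> (c xs) * (\<iota> (NN G (Suc k) xs ys) * \<phi> ys))"
      by (simp add: rhom_sum[OF i] rhom_mult[OF i] sum_distrib_right mult.assoc)
  qed
  also have "\<dots> = (\<Sum>xs\<in>Sc. \<Sum>ys\<in>Y. \<iota> (c xs) * (\<iota> (NN G (Suc k) xs ys) * \<phi> ys))"
    by (rule sum.swap)
  also have "\<dots> = (\<Sum>xs\<in>Sc. \<iota> (c xs) * (\<Sum>ys\<in>Y. \<iota> (NN G (Suc k) xs ys) * \<phi> ys))"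
    by (simp only: sum_distrib_left)
  also have "\<dots> = (\<Sum>xs\<in>Sc. \<iota> (c xs) * cobdry G k \<phi> xs)"
  proof (rule sum.cong[OF refl])
    fix xs assume xs: "xs \<in> Sc"
    then have T: "xs \<in> tuples G (Suc k)" using c by (auto simp: chain_def Sc_def)
    have "(\<Sum>ys\<in>Y. \<iota> (NN G (Suc k) xs ys) * \<phi> ys) =
          (\<Sum>ys\<in>Y. \<Sum>i\<in>{i\<in>{0..Suc k}. face G (Suc k) i xs = ys}. (-1) ^ i * \<phi> (face G (Suc k) i xs))"
    proof (rule sum.cong[OF refl])
      fix ys
      have e: "{i. i \<le> Suc k \<and> face G (Suc k) i xs = ys} = {i\<in>{0..Suc k}. face G (Suc k) i xs = ys}" by auto
      show "\<iota> (NN G (Suc k) xs ys) * \<phi> ys = (\<Sum>i\<in>{i\<in>{0..Suc k}. face G (Suc k) i xs = ys}. (-1) ^ i * \<phi> (face G (Suc k) i xs))"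
        unfolding NN_def e by (simp add: rhom_sum[OF i] rhom_m1pow[OF i] sum_distrib_right)
    qed
    also have "\<dots> = (\<Sum>i\<in>{0..Suc k}. (-1) ^ i * \<phi> (face G (Suc k) i xs))"
    proof (rule sum.group)
      show "(\<lambda>i. face G (Suc k) i xs) ` {0..Suc k} \<subseteq> Y"
      proof
        fix ys assume "ys \<in> (\<lambda>i. face G (Suc k) i xs) ` {0..Suc k}"
        then obtain i where i: "i \<in> {0..Suc k}" "ys = face G (Suc k) i xs" by blast
        show "ys \<in> Y" unfolding Y_def i(2)
          by (rule image_eqI[where x="(xs,i)"]) (use xs i in auto)
      qed
    qed (use finY in auto)
    also have "\<dots> = cobdry G k \<phi> xs" using T by (simp add: cobdry_def)
    finally show "\<iota> (c xs) * (\<Sum>ys\<in>Y. \<iota> (NN G (Suc k) xs ys) * \<phi> ys) = \<iota> (c xs) * cobdry G k \<phi> xs" by (rule arg_cong)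
  qed
  also have "\<dots> = pair \<iota> (cobdry G k \<phi>) c" by (simp add: pair_def Sc_def)
  finally show ?thesis .
qed

definition ind :: "'x \<Rightarrow> 'x \<Rightarrow> 'r::comm_ring_1" where "ind t = (\<lambda>x. if x = t then 1 else 0)"

lemma chain_ind: "t \<in> tuples G n \<Longrightarrow> chain G n (ind t)"
  by (simp add: chain_def ind_def)
lemma supp_ind: "{x. ind t x \<noteq> (0::'r::comm_ring_1)} = {t}"
  by (simp add: ind_def)
lemma pair_ind: "rhom \<iota> \<Longrightarrow> pair \<iota> \<phi> (ind t) = \<phi> t"
  unfolding pair_def supp_ind by (simp add: ind_def rhom_one)
lemma fin_ind: "finite {x. ind t x \<noteq> (0::'r::comm_ring_1)}"
  by (simp add: ind_def)

lemma cobdry_as_pair: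
  assumes "group G" "rhom \<iota>" "t \<in> tuples G (Suc k)"
  shows "cobdry G k \<phi> t = pair \<iota> \<phi> (bdry G (Suc k) (ind t))"
proof -
  have A: "pair \<iota> (cobdry G k \<phi>) (ind t) = cobdry G k \<phi> t" by (rule pair_ind[OF assms(2)])
  have B: "pair \<iota> \<phi> (bdry G (Suc k) (ind t)) = pair \<iota> (cobdry G k \<phi>) (ind t)"
    by (rule pair_bdry[OF assms(1,2) chain_ind[OF assms(3)]])
  show ?thesis by (rule trans[OF A[symmetric] B[symmetric]])
qed



locale tri =
  fixes lt :: "'x \<Rightarrow> 'x \<Rightarrow> bool" and B :: "('x \<Rightarrow> 'r::idom) set"
  assumes wf_lt: "wf {(a,b). lt a b}"
    and trans_lt: "lt a b \<Longrightarrow> lt b c \<Longrightarrow> lt a c"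
    and total_lt: "a \<noteq> b \<Longrightarrow> lt a b \<or> lt b a"
    and B0: "(\<lambda>_. 0) \<in> B"
    and Badd: "y \<in> B \<Longrightarrow> y' \<in> B \<Longrightarrow> (\<lambda>x. y x + y' x) \<in> B"
    and Bscale: "y \<in> B \<Longrightarrow> (\<lambda>x. r * y x) \<in> B"
    and Bfin: "y \<in> B \<Longrightarrow> finite {x. y x \<noteq> 0}"
    and PIP: "\<And>I::'r set. 0 \<in> I \<Longrightarrow> (\<And>a b. a \<in> I \<Longrightarrow> b \<in> I \<Longrightarrow> a + b \<in> I) \<Longrightarrow>
                 (\<And>r a. a \<in> I \<Longrightarrow> r * a \<in> I) \<Longrightarrow> \<exists>d\<in>I. \<forall>a\<in>I. d dvd a"
begin

lemma irrefl_lt: "\<not> lt a a"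
  using wf_not_refl[OF wf_lt, of a] by simp

lemma asym_lt: "lt a b \<Longrightarrow> \<not> lt b a"
  using trans_lt irrefl_lt by blast

definition below :: "'x \<Rightarrow> ('x \<Rightarrow> 'r) \<Rightarrow> bool" where
  "below \<alpha> y \<longleftrightarrow> (\<forall>x. y x \<noteq> 0 \<longrightarrow> x = \<alpha> \<or> lt x \<alpha>)"

definition Iset :: "'x \<Rightarrow> 'r set" where
  "Iset \<alpha> = {y \<alpha> | y. y \<in> B \<and> below \<alpha> y}"

lemma IsetI: "y \<in> B \<Longrightarrow> below \<alpha> y \<Longrightarrow> a = y \<alpha> \<Longrightarrow> a \<in> Iset \<alpha>"
  unfolding Iset_def by blast

lemma Iset_ideal: "\<exists>d\<in>Iset \<alpha>. \<forall>a\<in>Iset \<alpha>. d dvd a"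
proof (rule PIP)
  show "0 \<in> Iset \<alpha>" by (rule IsetI[OF B0]) (auto simp: below_def)
next
  fix a b assume "a \<in> Iset \<alpha>" "b \<in> Iset \<alpha>"
  then obtain y y' where yy: "a = y \<alpha>" "y \<in> B" "below \<alpha> y" "b = y' \<alpha>" "y' \<in> B" "below \<alpha> y'"
    unfolding Iset_def by blast
  have "below \<alpha> (\<lambda>x. y x + y' x)"
    unfolding below_def
  proof (intro allI impI)
    fix x assume "y x + y' x \<noteq> 0"
    then have "y x \<noteq> 0 \<or> y' x \<noteq> 0" by auto
    then show "x = \<alpha> \<or> lt x \<alpha>" using yy(3,6) unfolding below_def by blast
  qed
  then show "a + b \<in> Iset \<alpha>" by (rule IsetI[OF Badd[OF yy(2,5)]]) (simp add: yy(1,4))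
next
  fix r a assume "a \<in> Iset \<alpha>"
  then obtain y where yy: "a = y \<alpha>" "y \<in> B" "below \<alpha> y"
    unfolding Iset_def by blast
  have "below \<alpha> (\<lambda>x. r * y x)" using yy(3) unfolding below_def by auto
  then show "r * a \<in> Iset \<alpha>" by (rule IsetI[OF Bscale[OF yy(2)]]) (simp add: yy(1))
qed

definition dd :: "'x \<Rightarrow> 'r" where
  "dd \<alpha> = (SOME d. d \<in> Iset \<alpha> \<and> (\<forall>a\<in>Iset \<alpha>. d dvd a))"

lemma dd: "dd \<alpha> \<in> Iset \<alpha>" "a \<in> Iset \<alpha> \<Longrightarrow> dd \<alpha> dvd a"
proof -
  have "dd \<alpha> \<in> Iset \<alpha> \<and> (\<forall>a\<in>Iset \<alpha>. dd \<alpha> dvd a)"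
    unfolding dd_def using Iset_ideal[of \<alpha>] by (rule someI_ex[where P="\<lambda>d. d \<in> Iset \<alpha> \<and> (\<forall>a\<in>Iset \<alpha>. d dvd a)", OF bexE]) blast+
  then show "dd \<alpha> \<in> Iset \<alpha>" "a \<in> Iset \<alpha> \<Longrightarrow> dd \<alpha> dvd a" by auto
qed

definition YY :: "'x \<Rightarrow> 'x \<Rightarrow> 'r" where
  "YY \<alpha> = (if dd \<alpha> = 0 then (\<lambda>_. 0) else (SOME y. y \<in> B \<and> below \<alpha> y \<and> y \<alpha> = dd \<alpha>))"

lemma YY: "YY \<alpha> \<in> B" "below \<alpha> (YY \<alpha>)" "YY \<alpha> \<alpha> = dd \<alpha>"
proof -
  have "YY \<alpha> \<in> B \<and> below \<alpha> (YY \<alpha>) \<and> YY \<alpha> \<alpha> = dd \<alpha>"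
  proof (cases "dd \<alpha> = 0")
    case True then show ?thesis using B0 by (simp add: YY_def below_def)
  next
    case False
    obtain y where "dd \<alpha> = y \<alpha>" "y \<in> B" "below \<alpha> y" using dd(1)[of \<alpha>] unfolding Iset_def by blast
    then have "\<exists>y. y \<in> B \<and> below \<alpha> y \<and> y \<alpha> = dd \<alpha>" by metis
    then have "(SOME y. y \<in> B \<and> below \<alpha> y \<and> y \<alpha> = dd \<alpha>) \<in> B \<and> below \<alpha> (SOME y. y \<in> B \<and> below \<alpha> y \<and> y \<alpha> = dd \<alpha>)
       \<and> (SOME y. y \<in> B \<and> below \<alpha> y \<and> y \<alpha> = dd \<alpha>) \<alpha> = dd \<alpha>"
      by (rule someI_ex)
    then show ?thesis using False by (simp add: YY_def)
  qed
  then show "YY \<alpha> \<in> B" "below \<alpha> (YY \<alpha>)" "YY \<alpha> \<alpha> = dd \<alpha>" by auto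
qed

lemma YY_zero: "dd \<alpha> = 0 \<Longrightarrow> YY \<alpha> = (\<lambda>_. 0)" by (simp add: YY_def)
lemma YY_ne: "YY \<alpha> \<noteq> (\<lambda>_. 0) \<Longrightarrow> dd \<alpha> \<noteq> 0" using YY_zero by blast

lemma max_ex: "finite S \<Longrightarrow> S \<noteq> {} \<Longrightarrow> \<exists>\<alpha>\<in>S. \<forall>x\<in>S. x = \<alpha> \<or> lt x \<alpha>"
proof (induction S rule: finite_ne_induct)
  case (singleton x) then show ?case by auto
next
  case (insert x F)
  then obtain \<alpha> where a: "\<alpha> \<in> F" "\<forall>y\<in>F. y = \<alpha> \<or> lt y \<alpha>" by blast
  show ?case
  proof (cases "lt \<alpha> x")
    case True
    have "\<forall>y\<in>insert x F. y = x \<or> lt y x"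
    proof
      fix y assume "y \<in> insert x F"
      then consider "y = x" | "y = \<alpha>" | "lt y \<alpha>" using a by blast
      then show "y = x \<or> lt y x"
        by cases (use True trans_lt[of y \<alpha> x] in auto)
    qed
    then show ?thesis by blast
  next
    case False
    then have "lt x \<alpha>" using total_lt[of x \<alpha>] a insert by auto
    then show ?thesis using a by blast
  qed
qed

lemma lin_B: "finite A \<Longrightarrow> lin A m YY \<in> B"
proof (induction A rule: finite_induct)
  case empty then show ?case using B0 by (simp add: lin_def)
next
  case (insert a A)
  then show ?case using Badd[OF Bscale[OF YY(1)[of a]] insert(3)] by (simp add: lin_insert)
qed

lemma lin_add1:
  assumes "finite A"
  shows "\<exists>A' m'. finite A' \<and> (\<lambda>x. q * V b x + lin A m V x) = lin A' m' V"
proof -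
  let ?A = "insert b A"
  have "lin A m V = lin ?A (\<lambda>a. if a \<in> A then m a else 0) V" using assms by (intro lin_ext) auto
  moreover have "(\<lambda>x. q * V b x) = lin ?A (\<lambda>a. if a \<in> {b} then q else 0) V"
  proof -
    have "(\<lambda>x. q * V b x) = lin {b} (\<lambda>_. q) V" by (simp add: lin_def)
    also have "\<dots> = lin ?A (\<lambda>a. if a \<in> {b} then q else 0) V" using assms by (intro lin_ext) auto
    finally show ?thesis .
  qed
  ultimately have "(\<lambda>x. q * V b x + lin A m V x) = lin ?A (\<lambda>a. (if a \<in> {b} then q else 0) + (if a \<in> A then m a else 0)) V"
  proof (intro ext)
    fix x
    assume e1: "lin A m V = lin ?A (\<lambda>a. if a \<in> A then m a else 0) V"
      and e2: "(\<lambda>x. q * V b x) = lin ?A (\<lambda>a. if a \<in> {b} then q else 0) V"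
    have "q * V b x + lin A m V x = lin ?A (\<lambda>a. if a \<in> {b} then q else 0) V x + lin ?A (\<lambda>a. if a \<in> A then m a else 0) V x"
      using fun_cong[OF e1, of x] fun_cong[OF e2, of x] by simp
    also have "\<dots> = lin ?A (\<lambda>a. (if a \<in> {b} then q else 0) + (if a \<in> A then m a else 0)) V x" by (rule lin_add)
    finally show "q * V b x + lin A m V x = lin ?A (\<lambda>a. (if a \<in> {b} then q else 0) + (if a \<in> A then m a else 0)) V x" .
  qed
  then show ?thesis using assms by blast
qed

lemma rep: "y \<in> B \<Longrightarrow> \<exists>A m. finite A \<and> y = lin A m YY"
proof -
  have main: "\<forall>y. y \<in> B \<longrightarrow> below \<beta> y \<longrightarrow> (\<exists>A m. finite A \<and> y = lin A m YY)" for \<beta>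
  proof (induction \<beta> rule: wf_induct[OF wf_lt])
    case (1 \<beta>)
    show ?case
    proof (intro allI impI)
      fix y assume y: "y \<in> B" "below \<beta> y"
      have "y \<beta> \<in> Iset \<beta>" unfolding Iset_def using y by blast
      then obtain q where q: "y \<beta> = dd \<beta> * q" using dd(2) by (meson dvdE)
      define y' where "y' = (\<lambda>x. y x - q * YY \<beta> x)"
      have y'B: "y' \<in> B"
      proof -
        have "(\<lambda>x. y x + (-q) * YY \<beta> x) \<in> B" by (rule Badd[OF y(1) Bscale[OF YY(1)]])
        then show ?thesis unfolding y'_def by simp
      qed
      have y'b: "y' \<beta> = 0" unfolding y'_def using q YY(3)[of \<beta>] by (simp add: mult.commute)
      have y'below: "y' x \<noteq> 0 \<Longrightarrow> lt x \<beta>" for x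
      proof -
        assume "y' x \<noteq> 0"
        then have "y x \<noteq> 0 \<or> YY \<beta> x \<noteq> 0" unfolding y'_def by auto
        then have "x = \<beta> \<or> lt x \<beta>" using y(2) YY(2)[of \<beta>] unfolding below_def by blast
        then show "lt x \<beta>" using y'b \<open>y' x \<noteq> 0\<close> by auto
      qed
      have rep': "\<exists>A m. finite A \<and> y' = lin A m YY"
      proof (cases "{x. y' x \<noteq> 0} = {}")
        case True
        then have "y' = lin {} (\<lambda>_. 0) YY" by (auto simp: lin_def)
        then show ?thesis by blast
      next
        case False
        obtain \<beta>' where b': "\<beta>' \<in> {x. y' x \<noteq> 0}" "\<forall>x\<in>{x. y' x \<noteq> 0}. x = \<beta>' \<or> lt x \<beta>'"
          using max_ex[OF Bfin[OF y'B] False] by blast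
        have "lt \<beta>' \<beta>" using y'below b'(1) by simp
        moreover have "below \<beta>' y'" using b'(2) unfolding below_def by blast
        ultimately show ?thesis using 1 y'B by blast
      qed
      then obtain A m where Am: "finite A" "y' = lin A m YY" by blast
      have "y = (\<lambda>x. q * YY \<beta> x + y' x)" unfolding y'_def by simp
      then have yy: "y = (\<lambda>x. q * YY \<beta> x + lin A m YY x)" using Am(2) by simp
      obtain A' m' where "finite A'" "(\<lambda>x. q * YY \<beta> x + lin A m YY x) = lin A' m' YY"
        using lin_add1[OF Am(1), of q YY \<beta> m] by blast
      then show "\<exists>A m. finite A \<and> y = lin A m YY" using yy by blast
    qed
  qed
  assume "y \<in> B"
  moreover obtain \<beta> where "below \<beta> y"
  proof (cases "{x. y x \<noteq> 0} = {}")
    case True then show ?thesis using that[of undefined] by (auto simp: below_def)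
  next
    case False
    obtain \<beta> where "\<beta> \<in> {x. y x \<noteq> 0}" "\<forall>x\<in>{x. y x \<noteq> 0}. x = \<beta> \<or> lt x \<beta>"
      using max_ex[OF Bfin[OF \<open>y \<in> B\<close>] False] by blast
    then show ?thesis using that[of \<beta>] by (auto simp: below_def)
  qed
  ultimately show ?thesis using main by blast
qed

lemma uniq:
  assumes "finite A" "lin A m YY = (\<lambda>_. 0)" "a \<in> A"
  shows "m a = 0 \<or> YY a = (\<lambda>_. 0)"
proof (rule ccontr)
  assume na: "\<not> (m a = 0 \<or> YY a = (\<lambda>_. 0))"
  define A' where "A' = {a\<in>A. m a \<noteq> 0 \<and> YY a \<noteq> (\<lambda>_. 0)}"
  have "A' \<noteq> {}" "finite A'" using na assms unfolding A'_def by auto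
  then obtain \<alpha> where al: "\<alpha> \<in> A'" "\<forall>x\<in>A'. x = \<alpha> \<or> lt x \<alpha>" using max_ex by blast
  have aA: "\<alpha> \<in> A" "m \<alpha> \<noteq> 0" "YY \<alpha> \<noteq> (\<lambda>_. 0)" using al(1) unfolding A'_def by auto
  have z: "m \<gamma> * YY \<gamma> \<alpha> = 0" if "\<gamma> \<in> A - {\<alpha>}" for \<gamma>
  proof (cases "\<gamma> \<in> A'")
    case True
    then have "lt \<gamma> \<alpha>" using al(2) that by auto
    have "YY \<gamma> \<alpha> = 0"
    proof (rule ccontr)
      assume "YY \<gamma> \<alpha> \<noteq> 0"
      then have "\<alpha> = \<gamma> \<or> lt \<alpha> \<gamma>" using YY(2)[of \<gamma>] unfolding below_def by blast
      then show False using \<open>lt \<gamma> \<alpha>\<close> that asym_lt by blast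
    qed
    then show ?thesis by simp
  next
    case False
    then have "m \<gamma> = 0 \<or> YY \<gamma> = (\<lambda>_. 0)" using that unfolding A'_def by auto
    then show ?thesis by auto
  qed
  have "0 = lin A m YY \<alpha>" using assms(2) by simp
  also have "\<dots> = m \<alpha> * YY \<alpha> \<alpha> + (\<Sum>\<gamma>\<in>A - {\<alpha>}. m \<gamma> * YY \<gamma> \<alpha>)"
    unfolding lin_def using assms(1) aA(1) by (simp add: sum.remove)
  also have "(\<Sum>\<gamma>\<in>A - {\<alpha>}. m \<gamma> * YY \<gamma> \<alpha>) = 0" by (rule sum.neutral) (use z in blast)
  finally have "m \<alpha> * dd \<alpha> = 0" using YY(3) by simp
  then show False using aA YY_ne by simp
qed

lemma extend:
  fixes \<iota> :: "'r \<Rightarrow> 'k::field" and g :: "('x \<Rightarrow> 'r) \<Rightarrow> 'k"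
  assumes i: "rhom \<iota>" and inj0: "\<And>a. \<iota> a = 0 \<Longrightarrow> a = 0"
    and gadd: "\<And>y y'. y \<in> B \<Longrightarrow> y' \<in> B \<Longrightarrow> g (\<lambda>x. y x + y' x) = g y + g y'"
    and gscale: "\<And>y r. y \<in> B \<Longrightarrow> g (\<lambda>x. r * y x) = \<iota> r * g y"
  shows "\<exists>h. \<forall>y\<in>B. pair \<iota> h y = g y"
proof -
  have "g (\<lambda>_. 0) = g (\<lambda>_. 0) + g (\<lambda>_. 0)" using gadd[OF B0 B0] by simp
  then have g0: "g (\<lambda>_. 0) = 0" by (metis add_cancel_right_right)
  have glin: "finite A \<Longrightarrow> g (lin A m YY) = (\<Sum>a\<in>A. \<iota> (m a) * g (YY a))" for A m
  proof (induction A rule: finite_induct)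
    case empty then show ?case using g0 by (simp add: lin_def)
  next
    case (insert a A)
    have "g (lin (insert a A) m YY) = g (\<lambda>x. m a * YY a x + lin A m YY x)"
      using insert by (simp add: lin_insert)
    also have "\<dots> = g (\<lambda>x. m a * YY a x) + g (lin A m YY)"
      by (rule gadd[OF Bscale[OF YY(1)] lin_B[OF insert(1)]])
    also have "g (\<lambda>x. m a * YY a x) = \<iota> (m a) * g (YY a)" by (rule gscale[OF YY(1)])
    finally show ?case using insert by simp
  qed
  define R where "R = {(a,b). lt a b}"
  define H where "H = (\<lambda>(h::'x \<Rightarrow> 'k) \<alpha>. if dd \<alpha> = 0 then 0 else
      (g (YY \<alpha>) - (\<Sum>x\<in>{x. YY \<alpha> x \<noteq> 0} - {\<alpha>}. \<iota> (YY \<alpha> x) * h x)) / \<iota> (dd \<alpha>))"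
  define hh where "hh = wfrec R H"
  have hh_eq: "hh \<alpha> = H hh \<alpha>" for \<alpha>
  proof -
    have "hh \<alpha> = H (cut hh R \<alpha>) \<alpha>" unfolding hh_def using wfrec[of R H \<alpha>] wf_lt by (simp add: R_def)
    also have "H (cut hh R \<alpha>) \<alpha> = H hh \<alpha>"
    proof -
      have "(\<Sum>x\<in>{x. YY \<alpha> x \<noteq> 0} - {\<alpha>}. \<iota> (YY \<alpha> x) * cut hh R \<alpha> x) = (\<Sum>x\<in>{x. YY \<alpha> x \<noteq> 0} - {\<alpha>}. \<iota> (YY \<alpha> x) * hh x)"
      proof (rule sum.cong[OF refl])
        fix x assume "x \<in> {x. YY \<alpha> x \<noteq> 0} - {\<alpha>}"
        then have "lt x \<alpha>" using YY(2)[of \<alpha>] unfolding below_def by auto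
        then show "\<iota> (YY \<alpha> x) * cut hh R \<alpha> x = \<iota> (YY \<alpha> x) * hh x" by (simp add: cut_apply R_def)
      qed
      then show ?thesis unfolding H_def by simp
    qed
    finally show ?thesis .
  qed
  have pY: "pair \<iota> hh (YY \<alpha>) = g (YY \<alpha>)" for \<alpha>
  proof (cases "dd \<alpha> = 0")
    case True then show ?thesis using YY_zero g0 by (simp add: pair_zero)
  next
    case False
    have fin: "finite {x. YY \<alpha> x \<noteq> 0}" using Bfin[OF YY(1)] .
    have mem: "\<alpha> \<in> {x. YY \<alpha> x \<noteq> 0}" using False YY(3) by simp
    have nz: "\<iota> (dd \<alpha>) \<noteq> 0" using inj0 False by blast
    have "pair \<iota> hh (YY \<alpha>) = \<iota> (YY \<alpha> \<alpha>) * hh \<alpha> + (\<Sum>x\<in>{x. YY \<alpha> x \<noteq> 0} - {\<alpha>}. \<iota> (YY \<alpha> x) * hh x)"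
      unfolding pair_def using sum.remove[OF fin mem] by simp
    also have "\<iota> (YY \<alpha> \<alpha>) * hh \<alpha> = g (YY \<alpha>) - (\<Sum>x\<in>{x. YY \<alpha> x \<noteq> 0} - {\<alpha>}. \<iota> (YY \<alpha> x) * hh x)"
      using hh_eq[of \<alpha>] False nz YY(3)[of \<alpha>] by (simp add: H_def)
    finally show ?thesis by simp
  qed
  have "pair \<iota> hh y = g y" if yB: "y \<in> B" for y
  proof -
    obtain A m where Am: "finite A" "y = lin A m YY" using rep[OF yB] by blast
    have "pair \<iota> hh y = (\<Sum>a\<in>A. \<iota> (m a) * pair \<iota> hh (YY a))"
      unfolding Am(2) by (rule pair_lin[OF i Am(1) Bfin[OF YY(1)]])
    also have "\<dots> = g y" unfolding Am(2) glin[OF Am(1)] pY ..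
    finally show ?thesis .
  qed
  then show ?thesis by blast
qed

end



locale tri_sec = tri lt B for lt :: "'x \<Rightarrow> 'x \<Rightarrow> bool" and B :: "('x \<Rightarrow> 'r::idom) set" +
  fixes D :: "('x \<Rightarrow> 'r) \<Rightarrow> ('x \<Rightarrow> 'r)" and C :: "('x \<Rightarrow> 'r) set"
  assumes C0: "(\<lambda>_. 0) \<in> C"
    and Cadd: "c \<in> C \<Longrightarrow> c' \<in> C \<Longrightarrow> (\<lambda>x. c x + c' x) \<in> C"
    and Cscale: "c \<in> C \<Longrightarrow> (\<lambda>x. r * c x) \<in> C"
    and Dadd: "c \<in> C \<Longrightarrow> c' \<in> C \<Longrightarrow> D (\<lambda>x. c x + c' x) = (\<lambda>x. D c x + D c' x)"
    and Dscale: "c \<in> C \<Longrightarrow> D (\<lambda>x. r * c x) = (\<lambda>x. r * D c x)"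
    and D0: "D (\<lambda>_. 0) = (\<lambda>_. 0)"
    and Dsurj: "y \<in> B \<Longrightarrow> \<exists>c\<in>C. D c = y"
begin

definition UU :: "'x \<Rightarrow> 'x \<Rightarrow> 'r" where
  "UU \<alpha> = (if YY \<alpha> = (\<lambda>_. 0) then (\<lambda>_. 0) else (SOME c. c \<in> C \<and> D c = YY \<alpha>))"

lemma UU: "UU \<alpha> \<in> C" "D (UU \<alpha>) = YY \<alpha>"
proof -
  have "UU \<alpha> \<in> C \<and> D (UU \<alpha>) = YY \<alpha>"
  proof (cases "YY \<alpha> = (\<lambda>_. 0)")
    case True then show ?thesis using C0 D0 by (simp add: UU_def)
  next
    case False
    have "\<exists>c. c \<in> C \<and> D c = YY \<alpha>" using Dsurj[OF YY(1)] by blast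
    then have "(SOME c. c \<in> C \<and> D c = YY \<alpha>) \<in> C \<and> D (SOME c. c \<in> C \<and> D c = YY \<alpha>) = YY \<alpha>" by (rule someI_ex)
    then show ?thesis using False by (simp add: UU_def)
  qed
  then show "UU \<alpha> \<in> C" "D (UU \<alpha>) = YY \<alpha>" by auto
qed

lemma UU_zero: "YY \<alpha> = (\<lambda>_. 0) \<Longrightarrow> UU \<alpha> = (\<lambda>_. 0)" by (simp add: UU_def)

lemma linU_C: "finite A \<Longrightarrow> lin A m UU \<in> C"
proof (induction A rule: finite_induct)
  case empty then show ?case using C0 by (simp add: lin_def)
next
  case (insert a A)
  then show ?case using Cadd[OF Cscale[OF UU(1)[of a]] insert(3)] by (simp add: lin_insert)
qed

lemma D_linU: "finite A \<Longrightarrow> D (lin A m UU) = lin A m YY"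
proof (induction A rule: finite_induct)
  case empty then show ?case using D0 by (simp add: lin_def)
next
  case (insert a A)
  have "D (lin (insert a A) m UU) = D (\<lambda>x. m a * UU a x + lin A m UU x)"
    using insert by (simp add: lin_insert)
  also have "\<dots> = (\<lambda>x. D (\<lambda>x. m a * UU a x) x + D (lin A m UU) x)"
    by (rule Dadd[OF Cscale[OF UU(1)] linU_C[OF insert(1)]])
  also have "D (\<lambda>x. m a * UU a x) = (\<lambda>x. m a * YY a x)"
    using Dscale[OF UU(1)[of a], of "m a"] UU(2)[of a] by simp
  finally show ?case using insert by (simp add: lin_insert)
qed

lemma Uprime:
  assumes "finite A" "lin A m YY = (\<lambda>_. 0)"
  shows "lin A m UU = (\<lambda>_. 0)"
proof
  fix x
  show "lin A m UU x = 0" unfolding lin_def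
  proof (rule sum.neutral, rule ballI)
    fix a assume "a \<in> A"
    then have "m a = 0 \<or> YY a = (\<lambda>_. 0)" by (rule uniq[OF assms])
    then show "m a * UU a x = 0" using UU_zero by auto
  qed
qed

definition sec :: "('x \<Rightarrow> 'r) \<Rightarrow> ('x \<Rightarrow> 'r)" where
  "sec y = (SOME c. \<exists>A m. finite A \<and> y = lin A m YY \<and> c = lin A m UU)"

lemma lin_same:
  assumes "finite A" "finite A'" "lin A m YY = lin A' m' YY"
  shows "lin A m UU = lin A' m' UU"
proof -
  let ?AA = "A \<union> A'"
  let ?m1 = "\<lambda>a. if a \<in> A then m a else 0"
  let ?m2 = "\<lambda>a. if a \<in> A' then m' a else 0"
  have fin: "finite ?AA" using assms by simp
  have e1: "lin A m V = lin ?AA ?m1 V" for V :: "'x \<Rightarrow> 'x \<Rightarrow> 'r" using assms by (intro lin_ext) auto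
  have e2: "lin A' m' V = lin ?AA ?m2 V" for V :: "'x \<Rightarrow> 'x \<Rightarrow> 'r" using assms by (intro lin_ext) auto
  have "lin ?AA (\<lambda>a. ?m1 a - ?m2 a) YY = (\<lambda>_. 0)"
  proof
    fix x
    have "lin ?AA (\<lambda>a. ?m1 a - ?m2 a) YY x = lin ?AA ?m1 YY x - lin ?AA ?m2 YY x" by (rule lin_diff[symmetric])
    also have "\<dots> = 0" using assms(3) e1[of YY] e2[of YY] by simp
    finally show "lin ?AA (\<lambda>a. ?m1 a - ?m2 a) YY x = 0" .
  qed
  then have z: "lin ?AA (\<lambda>a. ?m1 a - ?m2 a) UU = (\<lambda>_. 0)" by (rule Uprime[OF fin])
  show ?thesis
  proof
    fix x
    have "lin ?AA ?m1 UU x - lin ?AA ?m2 UU x = 0" using z lin_diff[of ?AA ?m1 UU x ?m2] by simp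
    then show "lin A m UU x = lin A' m' UU x" using e1[of UU] e2[of UU] by simp
  qed
qed

lemma sec_rep:
  assumes "finite A" "y = lin A m YY"
  shows "sec y = lin A m UU"
proof -
  have "\<exists>c. \<exists>A m. finite A \<and> y = lin A m YY \<and> c = lin A m UU" using assms by blast
  then have "\<exists>A' m'. finite A' \<and> y = lin A' m' YY \<and> sec y = lin A' m' UU"
    unfolding sec_def by (rule someI_ex)
  then obtain A' m' where "finite A'" "y = lin A' m' YY" "sec y = lin A' m' UU" by blast
  then show ?thesis using lin_same[OF assms(1), of A' m m'] assms by simp
qed

lemma sec_B: "y \<in> B \<Longrightarrow> sec y \<in> C \<and> D (sec y) = y"
  using rep[of y] sec_rep linU_C D_linU by metis

lemma sec_add:
  assumes "y \<in> B" "y' \<in> B"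
  shows "sec (\<lambda>x. y x + y' x) = (\<lambda>x. sec y x + sec y' x)"
proof -
  obtain A m where A: "finite A" "y = lin A m YY" using rep[OF assms(1)] by blast
  obtain A' m' where A': "finite A'" "y' = lin A' m' YY" using rep[OF assms(2)] by blast
  let ?AA = "A \<union> A'"
  let ?m1 = "\<lambda>a. if a \<in> A then m a else 0"
  let ?m2 = "\<lambda>a. if a \<in> A' then m' a else 0"
  have fin: "finite ?AA" using A A' by simp
  have e1: "lin A m V = lin ?AA ?m1 V" for V :: "'x \<Rightarrow> 'x \<Rightarrow> 'r" using A A' by (intro lin_ext) auto
  have e2: "lin A' m' V = lin ?AA ?m2 V" for V :: "'x \<Rightarrow> 'x \<Rightarrow> 'r" using A A' by (intro lin_ext) auto
  have s: "(\<lambda>x. y x + y' x) = lin ?AA (\<lambda>a. ?m1 a + ?m2 a) YY"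
    unfolding A(2) A'(2) e1 e2 by (intro ext) (rule lin_add)
  have "sec (\<lambda>x. y x + y' x) = lin ?AA (\<lambda>a. ?m1 a + ?m2 a) UU" by (rule sec_rep[OF fin s])
  also have "\<dots> = (\<lambda>x. lin ?AA ?m1 UU x + lin ?AA ?m2 UU x)" by (intro ext) (rule lin_add[symmetric])
  also have "\<dots> = (\<lambda>x. sec y x + sec y' x)"
    using sec_rep[OF A] sec_rep[OF A'] e1[of UU] e2[of UU] by simp
  finally show ?thesis .
qed

lemma sec_scale:
  assumes "y \<in> B"
  shows "sec (\<lambda>x. r * y x) = (\<lambda>x. r * sec y x)"
proof -
  obtain A m where A: "finite A" "y = lin A m YY" using rep[OF assms(1)] by blast
  have s: "(\<lambda>x. r * y x) = lin A (\<lambda>a. r * m a) YY" unfolding A(2) by (intro ext) (rule lin_scale)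
  have "sec (\<lambda>x. r * y x) = lin A (\<lambda>a. r * m a) UU" by (rule sec_rep[OF A(1) s])
  also have "\<dots> = (\<lambda>x. r * lin A m UU x)" by (intro ext) (rule lin_scale[symmetric])
  finally show ?thesis using sec_rep[OF A] by simp
qed

end



lemma exists_wo: "\<exists>lt::'a \<Rightarrow> 'a \<Rightarrow> bool. wf {(a,b). lt a b} \<and> (\<forall>a b c. lt a b \<longrightarrow> lt b c \<longrightarrow> lt a c) \<and> (\<forall>a b. a \<noteq> b \<longrightarrow> lt a b \<or> lt b a)"
proof -
  obtain r :: "'a rel" where r: "well_order_on UNIV r" using well_order_on by blast
  define lt where "lt = (\<lambda>a b. (a,b) \<in> r - Id)"
  have e: "{(a,b). lt a b} = r - Id" by (auto simp: lt_def)
  have wf: "wf (r - Id)" using r by (simp add: well_order_on_def)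
  have tr: "trans r" and an: "antisym r" and tot: "total_on UNIV r"
    using r by (auto simp: well_order_on_def linear_order_on_def partial_order_on_def preorder_on_def)
  have "\<forall>a b c. lt a b \<longrightarrow> lt b c \<longrightarrow> lt a c"
    unfolding lt_def using tr an by (metis DiffD1 DiffD2 DiffI IdI antisymD pair_in_Id_conv transD)
  moreover have "\<forall>a b. a \<noteq> b \<longrightarrow> lt a b \<or> lt b a"
    unfolding lt_def using tot by (auto simp: total_on_def)
  ultimately show ?thesis using wf e by metis
qed

lemma av_basic:
  assumes "nonarch_abs av"
  shows "av 0 = 0" "av 1 = 1" "av x \<ge> 0" "av (x * y) = av x * av y" "av (x + y) \<le> max (av x) (av y)"
    "av (- x) = av x"
proof -
  show z: "av 0 = 0" and nn: "av x \<ge> 0" and mu: "av (x * y) = av x * av y" and ad: "av (x + y) \<le> max (av x) (av y)"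
    using assms by (auto simp: nonarch_abs_def)
  have "av 1 = av 1 * av 1" using assms unfolding nonarch_abs_def by (metis mult_1)
  moreover have "av 1 \<noteq> 0" using assms unfolding nonarch_abs_def by simp
  ultimately show o: "av 1 = 1" by simp
  have "av (-1) * av (-1) = 1" using assms o unfolding nonarch_abs_def by (metis mult_minus1 minus_minus)
  moreover have "av (-1) \<ge> 0" using assms unfolding nonarch_abs_def by simp
  ultimately have "av (-1) = 1" by (metis mult_cancel_right1 nle_le mult_le_cancel_right1 mult_less_cancel_right2 not_le)
  then show "av (- x) = av x" using assms unfolding nonarch_abs_def by (metis mult_minus1 mult_1)
qed

lemma av_sum_le:
  assumes "nonarch_abs av" "\<And>a. a \<in> A \<Longrightarrow> av (f a) \<le> M" "0 \<le> M"
  shows "av (sum f A) \<le> M"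
  using assms(2)
proof (induction A rule: infinite_finite_induct)
  case (infinite A) then show ?case using assms av_basic(1)[OF assms(1)] by simp
next
  case empty then show ?case using assms av_basic(1)[OF assms(1)] by simp
next
  case (insert a A)
  have "av (sum f (insert a A)) = av (f a + sum f A)" using insert by simp
  also have "\<dots> \<le> max (av (f a)) (av (sum f A))" by (rule av_basic(5)[OF assms(1)])
  also have "\<dots> \<le> M" using insert by auto
  finally show ?case .
qed

lemma cobdry_diff: "cobdry G k (\<lambda>t. f t - c t) xs = cobdry G k f xs - cobdry G k c xs"
  by (simp add: cobdry_def sum_subtractf right_diff_distrib)

lemma pair_zero_fun: "pair \<iota> (\<lambda>_. 0) c = 0" by (simp add: pair_def)

theorem generic:
  fixes av :: "'k::field \<Rightarrow> real" and G :: "('g, 'b) monoid_scheme" and \<iota> :: "'r::idom \<Rightarrow> 'k"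
  assumes av: "nonarch_abs av" and G: "group G" and i: "rhom \<iota>" and inj0: "\<And>a. \<iota> a = 0 \<Longrightarrow> a = 0"
    and bnd: "\<And>r. av (\<iota> r) \<le> 1"
    and PIP: "\<And>I::'r set. 0 \<in> I \<Longrightarrow> (\<And>a b. a \<in> I \<Longrightarrow> b \<in> I \<Longrightarrow> a + b \<in> I) \<Longrightarrow>
                 (\<And>r a. a \<in> I \<Longrightarrow> r * a \<in> I) \<Longrightarrow> \<exists>d\<in>I. \<forall>a\<in>I. d dvd a"
    and fg: "homology_fg TYPE('r) G n"
  shows "comparison_surj av G n"
proof (cases n)
  case 0
  show ?thesis unfolding comparison_surj_def
  proof (intro allI impI)
    fix f :: "'g list \<Rightarrow> 'k" assume f: "cochain G n f \<and> cobdry G n f = (\<lambda>_. 0)"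
    have "av (f xs) \<le> av (f [])" for xs
    proof (cases "xs = []")
      case False
      then have "xs \<notin> tuples G 0" by (simp add: tuples_def)
      then have "f xs = 0" using f 0 by (simp add: cochain_def)
      then show ?thesis using av_basic[OF av] by simp
    qed simp
    then have "bounded_cochain av f" unfolding bounded_cochain_def by blast
    then show "\<exists>b. cochain G n b \<and> bounded_cochain av b \<and> cobdry G n b = (\<lambda>_. 0) \<and>
             (if n = 0 then f = b else (\<exists>h. cochain G (n - 1) h \<and> (\<lambda>xs. f xs - b xs) = cobdry G (n - 1) h))"
    proof (intro exI[of _ f] conjI)
      show "cochain G n f" "cobdry G n f = (\<lambda>_. 0)" using f by auto
      show "if n = 0 then f = f else (\<exists>h. cochain G (n - 1) h \<and> (\<lambda>xs. f xs - f xs) = cobdry G (n - 1) h)"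
        using 0 by simp
    qed blast
  qed
next
  case (Suc m)
  obtain lt :: "'g list \<Rightarrow> 'g list \<Rightarrow> bool" where lt0: "wf {(a,b). lt a b} \<and> (\<forall>a b c. lt a b \<longrightarrow> lt b c \<longrightarrow> lt a c) \<and> (\<forall>a b. a \<noteq> b \<longrightarrow> lt a b \<or> lt b a)"
    using exists_wo by (rule exE)
  have lt: "wf {(a,b). lt a b}" "\<And>a b c. lt a b \<Longrightarrow> lt b c \<Longrightarrow> lt a c"
    "\<And>a b. a \<noteq> b \<Longrightarrow> lt a b \<or> lt b a" using lt0 by blast+
  define C where "C = {c :: 'g list \<Rightarrow> 'r. chain G (Suc m) c}"
  define D where "D = (bdry G (Suc m) :: ('g list \<Rightarrow> 'r) \<Rightarrow> 'g list \<Rightarrow> 'r)"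
  define B where "B = D ` C"
  have BC: "y \<in> B \<longleftrightarrow> (\<exists>c. chain G (Suc m) c \<and> y = bdry G (Suc m) c)" for y
    unfolding B_def C_def D_def by blast
  have Dadd: "c \<in> C \<Longrightarrow> c' \<in> C \<Longrightarrow> D (\<lambda>x. c x + c' x) = (\<lambda>x. D c x + D c' x)" for c c'
    unfolding C_def D_def by (intro ext bdry_add) (auto intro: chain_fin)
  have Dscale: "c \<in> C \<Longrightarrow> D (\<lambda>x. r * c x) = (\<lambda>x. r * D c x)" for c r
    unfolding C_def D_def by (intro ext bdry_scale) (auto intro: chain_fin)
  have D0: "D (\<lambda>_. 0) = (\<lambda>_. 0)" unfolding D_def by (intro ext) (rule bdry_zero)
  have C0: "(\<lambda>_. 0) \<in> C" unfolding C_def by (simp add: chain_zero)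
  have Cadd: "c \<in> C \<Longrightarrow> c' \<in> C \<Longrightarrow> (\<lambda>x. c x + c' x) \<in> C" for c c' unfolding C_def by (simp add: chain_add)
  have Cscale: "c \<in> C \<Longrightarrow> (\<lambda>x. r * c x) \<in> C" for c r unfolding C_def by (simp add: chain_scale)
  have BchainC: "chain G m y" if yB: "y \<in> B" for y
  proof -
    obtain c where "c \<in> C" "y = D c" using yB unfolding B_def by blast
    then show ?thesis unfolding C_def D_def using chain_bdry[OF G] by simp
  qed
  interpret T: tri_sec lt B D C
  proof (unfold_locales)
    show "wf {(a,b). lt a b}" by (rule lt(1))
    show "\<And>a b c. lt a b \<Longrightarrow> lt b c \<Longrightarrow> lt a c" by (rule lt(2))
    show "\<And>a b. a \<noteq> b \<Longrightarrow> lt a b \<or> lt b a" by (rule lt(3))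
    show "(\<lambda>_. 0) \<in> B" unfolding B_def by (rule image_eqI[where x="\<lambda>_. 0"]) (use D0 C0 in auto)
    show "(\<lambda>x. y x + y' x) \<in> B" if yB: "y \<in> B" "y' \<in> B" for y y'
    proof -
      obtain c c' where "c \<in> C" "y = D c" "c' \<in> C" "y' = D c'" using yB unfolding B_def by blast
      then show ?thesis unfolding B_def using Dadd[of c c'] Cadd[of c c'] by (intro image_eqI[where x="\<lambda>x. c x + c' x"]) auto
    qed
    show "(\<lambda>x. r * y x) \<in> B" if yB: "y \<in> B" for y r
    proof -
      obtain c where "c \<in> C" "y = D c" using yB unfolding B_def by blast
      then show ?thesis unfolding B_def using Dscale[of c r] Cscale[of c r] by (intro image_eqI[where x="\<lambda>x. r * c x"]) auto
    qed
    show "\<And>y. y \<in> B \<Longrightarrow> finite {x. y x \<noteq> 0}" using BchainC chain_fin by blast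
    show "\<And>I::'r set. 0 \<in> I \<Longrightarrow> (\<And>a b. a \<in> I \<Longrightarrow> b \<in> I \<Longrightarrow> a + b \<in> I) \<Longrightarrow>
                 (\<And>r a. a \<in> I \<Longrightarrow> r * a \<in> I) \<Longrightarrow> \<exists>d\<in>I. \<forall>a\<in>I. d dvd a" by (rule PIP)
    show "(\<lambda>_. 0) \<in> C" by (rule C0)
    show "\<And>c c'. c \<in> C \<Longrightarrow> c' \<in> C \<Longrightarrow> (\<lambda>x. c x + c' x) \<in> C" by (rule Cadd)
    show "\<And>c r. c \<in> C \<Longrightarrow> (\<lambda>x. r * c x) \<in> C" by (rule Cscale)
    show "\<And>c c'. c \<in> C \<Longrightarrow> c' \<in> C \<Longrightarrow> D (\<lambda>x. c x + c' x) = (\<lambda>x. D c x + D c' x)" by (rule Dadd)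
    show "\<And>c r. c \<in> C \<Longrightarrow> D (\<lambda>x. r * c x) = (\<lambda>x. r * D c x)" by (rule Dscale)
    show "D (\<lambda>_. 0) = (\<lambda>_. 0)" by (rule D0)
    show "\<And>y. y \<in> B \<Longrightarrow> \<exists>c\<in>C. D c = y" unfolding B_def by blast
  qed
  obtain F :: "('g list \<Rightarrow> 'r) set" where F: "finite F" "\<forall>z\<in>F. cycle G n z"
    "\<And>z. cycle G n z \<Longrightarrow> \<exists>a d. chain G (Suc n) d \<and> z = (\<lambda>xs. (\<Sum>w\<in>F. a w * w xs) + bdry G (Suc n) d xs)"
    using fg unfolding homology_fg_def by blast
  show ?thesis unfolding comparison_surj_def
  proof (intro allI impI)
    fix f :: "'g list \<Rightarrow> 'k" assume f: "cochain G n f \<and> cobdry G n f = (\<lambda>_. 0)"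
    define M where "M = Max (insert 0 ((\<lambda>z. av (pair \<iota> f z)) ` F))"
    have M0: "0 \<le> M" unfolding M_def using F(1) by simp
    have Mz: "z \<in> F \<Longrightarrow> av (pair \<iota> f z) \<le> M" for z unfolding M_def using F(1) by simp
    have bound: "av (pair \<iota> f w) \<le> M" if w: "cycle G n w" for w
    proof -
      obtain a d where ad: "chain G (Suc n) d" "w = (\<lambda>xs. (\<Sum>z\<in>F. a z * z xs) + bdry G (Suc n) d xs)"
        using F(3)[OF w] by blast
      have Fch: "z \<in> F \<Longrightarrow> chain G n z" for z using F(2) by (simp add: cycle_def)
      have w': "w = (\<lambda>xs. lin F a (\<lambda>z. z) xs + bdry G (Suc n) d xs)" unfolding ad(2) lin_def by simp
      have fin1: "finite {x. lin F a (\<lambda>z. z) x \<noteq> 0}" using F(1) Fch chain_fin by (intro fin_lin) blast+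
      have fin2: "finite {x. bdry G (Suc n) d x \<noteq> 0}" using chain_bdry[OF G ad(1)] chain_fin by blast
      have "pair \<iota> f w = pair \<iota> f (lin F a (\<lambda>z. z)) + pair \<iota> f (bdry G (Suc n) d)"
        unfolding w' by (rule pair_add[OF i fin1 fin2])
      also have "pair \<iota> f (bdry G (Suc n) d) = 0"
        using pair_bdry[OF G i ad(1), of f] f pair_zero_fun by simp
      also have "pair \<iota> f (lin F a (\<lambda>z. z)) = (\<Sum>z\<in>F. \<iota> (a z) * pair \<iota> f z)"
        using pair_lin[OF i F(1), of "\<lambda>z. z"] Fch chain_fin by blast
      finally have e: "pair \<iota> f w = (\<Sum>z\<in>F. \<iota> (a z) * pair \<iota> f z)" by simp
      show ?thesis unfolding e
      proof (rule av_sum_le[OF av _ M0])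
        fix z assume z: "z \<in> F"
        have "av (\<iota> (a z) * pair \<iota> f z) = av (\<iota> (a z)) * av (pair \<iota> f z)" by (rule av_basic(4)[OF av])
        also have "\<dots> \<le> 1 * M" using bnd Mz[OF z] av_basic(3)[OF av] by (intro mult_mono) auto
        finally show "av (\<iota> (a z) * pair \<iota> f z) \<le> M" by simp
      qed
    qed
    define g where "g = (\<lambda>y. pair \<iota> f (T.sec y))"
    have secC: "y \<in> B \<Longrightarrow> chain G (Suc m) (T.sec y)" for y using T.sec_B unfolding C_def by blast
    have gadd: "g (\<lambda>x. y x + y' x) = g y + g y'" if "y \<in> B" "y' \<in> B" for y y'
      unfolding g_def T.sec_add[OF that] by (rule pair_add[OF i chain_fin[OF secC] chain_fin[OF secC]]) (use that in auto)
    have gscale: "g (\<lambda>x. r * y x) = \<iota> r * g y" if "y \<in> B" for y r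
      unfolding g_def T.sec_scale[OF that] by (rule pair_scale[OF i chain_fin[OF secC]]) (use that in auto)
    have "\<exists>h. \<forall>y\<in>B. pair \<iota> h y = g y"
    proof (rule T.extend[of \<iota> g])
      show "rhom \<iota>" by (rule i)
      show "\<And>a. \<iota> a = 0 \<Longrightarrow> a = 0" by (rule inj0)
      show "\<And>y y'. y \<in> B \<Longrightarrow> y' \<in> B \<Longrightarrow> g (\<lambda>x. y x + y' x) = g y + g y'" by (rule gadd)
      show "\<And>y r. y \<in> B \<Longrightarrow> g (\<lambda>x. r * y x) = \<iota> r * g y" by (rule gscale)
    qed
    then obtain h0 where h0: "\<And>y. y \<in> B \<Longrightarrow> pair \<iota> h0 y = g y" by blast
    define h where "h = (\<lambda>x. if x \<in> tuples G m then h0 x else 0)"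
    have hco: "cochain G m h" unfolding h_def cochain_def by simp
    have ph: "pair \<iota> h y = g y" if y: "y \<in> B" for y
    proof -
      have "pair \<iota> h y = pair \<iota> h0 y" unfolding pair_def
      proof (rule sum.cong[OF refl])
        fix x assume "x \<in> {x. y x \<noteq> 0}"
        then have "x \<in> tuples G m" using BchainC[OF y] by (auto simp: chain_def)
        then show "\<iota> (y x) * h x = \<iota> (y x) * h0 x" by (simp add: h_def)
      qed
      then show ?thesis using h0[OF y] by simp
    qed
    define b where "b = (\<lambda>t. f t - cobdry G m h t)"
    have bco: "cochain G n b"
      using f unfolding cochain_def b_def Suc by (simp add: cobdry_def)
    have bcy: "cobdry G n b = (\<lambda>_. 0)"
    proof
      fix xs
      have "cobdry G n b xs = cobdry G (Suc m) f xs - cobdry G (Suc m) (cobdry G m h) xs"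
        unfolding b_def Suc by (rule cobdry_diff)
      also have "\<dots> = 0" using f cobdry_cobdry[OF G] Suc by simp
      finally show "cobdry G n b xs = 0" .
    qed
    have bbd: "av (b t) \<le> M" for t
    proof (cases "t \<in> tuples G (Suc m)")
      case False
      then have "b t = 0" using bco Suc by (simp add: cochain_def)
      then show ?thesis using M0 av_basic[OF av] by simp
    next
      case True
      have it: "chain G (Suc m) (ind t)" by (rule chain_ind[OF True])
      have yB: "bdry G (Suc m) (ind t) \<in> B" using BC it by blast
      have sC: "chain G (Suc m) (T.sec (bdry G (Suc m) (ind t)))" by (rule secC[OF yB])
      have sD: "bdry G (Suc m) (T.sec (bdry G (Suc m) (ind t))) = bdry G (Suc m) (ind t)"
        using T.sec_B[OF yB] unfolding D_def by blast
      define w where "w = (\<lambda>x. ind t x - T.sec (bdry G (Suc m) (ind t)) x)"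
      have wch: "chain G (Suc m) w" unfolding w_def by (rule chain_diff[OF it sC])
      have wb: "bdry G (Suc m) w = (\<lambda>_. 0)"
      proof
        fix ys
        have "bdry G (Suc m) w ys = bdry G (Suc m) (ind t) ys - bdry G (Suc m) (T.sec (bdry G (Suc m) (ind t))) ys"
          unfolding w_def by (rule bdry_diff[OF chain_fin[OF it] chain_fin[OF sC]])
        then show "bdry G (Suc m) w ys = 0" using sD by simp
      qed
      have wcy: "cycle G n w" unfolding cycle_def Suc using wch wb by simp
      have "cobdry G m h t = pair \<iota> h (bdry G (Suc m) (ind t))" by (rule cobdry_as_pair[OF G i True])
      also have "\<dots> = pair \<iota> f (T.sec (bdry G (Suc m) (ind t)))" using ph[OF yB] by (simp add: g_def)
      finally have cb: "cobdry G m h t = pair \<iota> f (T.sec (bdry G (Suc m) (ind t)))" .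
      have pi: "pair \<iota> f (ind t :: 'g list \<Rightarrow> 'r) = f t" by (rule pair_ind[OF i])
      have "b t = pair \<iota> f (ind t) - pair \<iota> f (T.sec (bdry G (Suc m) (ind t)))"
        unfolding b_def using pi cb by simp
      also have "\<dots> = pair \<iota> f w" unfolding w_def
        by (rule pair_diff[OF i chain_fin[OF it] chain_fin[OF sC], symmetric])
      finally show ?thesis using bound[OF wcy] by simp
    qed
    have "bounded_cochain av b" unfolding bounded_cochain_def using bbd by blast
    moreover have "(\<lambda>xs. f xs - b xs) = cobdry G (n - 1) h" unfolding b_def Suc by simp
    ultimately show "\<exists>b. cochain G n b \<and> bounded_cochain av b \<and> cobdry G n b = (\<lambda>_. 0) \<and>
             (if n = 0 then f = b else (\<exists>h. cochain G (n - 1) h \<and> (\<lambda>xs. f xs - b xs) = cobdry G (n - 1) h))"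
    proof (intro exI[of _ b] conjI)
      show "if n = 0 then f = b else (\<exists>h. cochain G (n - 1) h \<and> (\<lambda>xs. f xs - b xs) = cobdry G (n - 1) h)"
        using hco \<open>(\<lambda>xs. f xs - b xs) = cobdry G (n - 1) h\<close> Suc by auto
    qed (use bco bcy in blast)+
  qed
qed



lemma av_of_nat_le:
  assumes "nonarch_abs av"
  shows "av (of_nat n) \<le> 1"
proof (induction n)
  case 0 then show ?case using av_basic[OF assms] by simp
next
  case (Suc n)
  have "av (of_nat (Suc n)) = av (1 + of_nat n)" by simp
  also have "\<dots> \<le> max (av 1) (av (of_nat n))" by (rule av_basic(5)[OF assms])
  finally show ?case using Suc av_basic(2)[OF assms] by simp
qed

lemma av_of_int_le:
  fixes av :: "'k::field \<Rightarrow> real"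
  assumes "nonarch_abs av"
  shows "av (of_int z) \<le> 1"
proof (cases "z \<ge> 0")
  case True
  then have "(of_int z :: 'k) = of_nat (nat z)" by simp
  then show ?thesis using av_of_nat_le[OF assms, of "nat z"] by simp
next
  case False
  then have "(of_int z :: 'k) = - of_nat (nat (- z))" by simp
  then show ?thesis using av_of_nat_le[OF assms, of "nat (- z)"] av_basic(6)[OF assms, of "of_nat (nat (- z))"] by simp
qed

lemma field_PIP:
  fixes I :: "'r::field set"
  assumes "0 \<in> I"
  shows "\<exists>d\<in>I. \<forall>a\<in>I. d dvd a"
proof (cases "\<exists>d\<in>I. d \<noteq> 0")
  case True
  then obtain d where "d \<in> I" "d \<noteq> 0" by blast
  then show ?thesis by (metis dvd_field_iff)
next
  case False
  then show ?thesis using assms by auto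
qed

lemma int_PIP:
  fixes I :: "int set"
  assumes I0: "0 \<in> I" and Iadd: "\<And>a b. a \<in> I \<Longrightarrow> b \<in> I \<Longrightarrow> a + b \<in> I"
    and Isc: "\<And>r a. a \<in> I \<Longrightarrow> r * a \<in> I"
  shows "\<exists>d\<in>I. \<forall>a\<in>I. d dvd a"
proof (cases "\<exists>d\<in>I. d \<noteq> 0")
  case False
  then show ?thesis using I0 by auto
next
  case True
  then obtain a0 where a0: "a0 \<in> I" "a0 \<noteq> 0" by blast
  have "\<exists>n::nat. n > 0 \<and> int n \<in> I"
  proof (cases "a0 > 0")
    case True then show ?thesis using a0 by (intro exI[of _ "nat a0"]) auto
  next
    case False
    then have "- a0 > 0" using a0 by simp
    moreover have "- a0 \<in> I" using Isc[OF a0(1), of "-1"] by simp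
    ultimately show ?thesis by (intro exI[of _ "nat (- a0)"]) auto
  qed
  define n0 where "n0 = (LEAST n::nat. n > 0 \<and> int n \<in> I)"
  have n0: "n0 > 0" "int n0 \<in> I" using LeastI_ex[OF \<open>\<exists>n::nat. n > 0 \<and> int n \<in> I\<close>] unfolding n0_def by auto
  have min: "\<And>n::nat. n > 0 \<Longrightarrow> int n \<in> I \<Longrightarrow> n0 \<le> n" unfolding n0_def by (rule Least_le) auto
  have "int n0 dvd a" if a: "a \<in> I" for a
  proof -
    have "a + (- (a div int n0)) * int n0 \<in> I" by (rule Iadd[OF a Isc[OF n0(2)]])
    moreover have "a + (- (a div int n0)) * int n0 = a mod int n0" by (simp add: minus_div_mult_eq_mod[symmetric])
    ultimately have m: "a mod int n0 \<in> I" by simp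
    have r: "0 \<le> a mod int n0" "a mod int n0 < int n0" using n0(1) by auto
    show ?thesis
    proof (rule ccontr)
      assume "\<not> int n0 dvd a"
      then have "a mod int n0 > 0" using r by (auto simp: dvd_eq_mod_eq_0)
      then have "n0 \<le> nat (a mod int n0)" using min[of "nat (a mod int n0)"] m by simp
      then show False using r by linarith
    qed
  qed
  then show ?thesis using n0(2) by blast
qed

lemma of_int_inj0:
  assumes "CHAR('k::field) = 0" "(of_int a :: 'k) = 0"
  shows "a = 0"
  using assms of_int_eq_0_iff_char_dvd[where 'a='k, of a] by simp

lemma rhom_of_int: "rhom (of_int :: int \<Rightarrow> 'k::comm_ring_1)"
  by (simp add: rhom_def)

section \<open>rational embedding\<close>

definition ratk :: "rat \<Rightarrow> 'k::field" where
  "ratk q = (case quotient_of q of (a, b) \<Rightarrow> of_int a / of_int b)"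

lemma of_int_ne0: "CHAR('k::field) = 0 \<Longrightarrow> b \<noteq> 0 \<Longrightarrow> (of_int b :: 'k) \<noteq> 0"
  using of_int_inj0 by blast

lemma ratk_frac:
  assumes ch: "CHAR('k::field) = 0" and b: "b \<noteq> 0"
  shows "(ratk (of_int a / of_int b) :: 'k) = of_int a / of_int b"
proof -
  obtain a' b' where q: "quotient_of (of_int a / of_int b) = (a', b')" by (cases "quotient_of (of_int a / of_int b)")
  have b': "b' > 0" using quotient_of_denom_pos[OF q] .
  have "(of_int a / of_int b :: rat) = of_int a' / of_int b'" using quotient_of_div[OF q] .
  then have "(of_int a * of_int b' :: rat) = of_int a' * of_int b" using b b' by (simp add: field_simps)
  then have e: "a * b' = a' * b" by (metis of_int_eq_iff of_int_mult)
  have nz: "(of_int b :: 'k) \<noteq> 0" "(of_int b' :: 'k) \<noteq> 0" using of_int_ne0[OF ch] b b' by auto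
  have "(of_int a * of_int b' :: 'k) = of_int a' * of_int b" using e by (metis of_int_mult)
  then have "(of_int a' / of_int b' :: 'k) = of_int a / of_int b" using nz by (simp add: field_simps)
  then show ?thesis unfolding ratk_def q by simp
qed

lemma rat_frac_ex: "\<exists>a b. b \<noteq> 0 \<and> q = (of_int a / of_int b :: rat)"
proof -
  obtain a b where q: "quotient_of q = (a, b)" by (cases "quotient_of q")
  show ?thesis using quotient_of_div[OF q] quotient_of_denom_pos[OF q] by (intro exI[of _ a] exI[of _ b]) auto
qed

lemma rhom_ratk:
  assumes ch: "CHAR('k::field) = 0"
  shows "rhom (ratk :: rat \<Rightarrow> 'k)"
  unfolding rhom_def
proof (intro conjI allI)
  fix x y :: rat
  obtain a b where x: "b \<noteq> 0" "x = of_int a / of_int b" using rat_frac_ex by blast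
  obtain c d where y: "d \<noteq> 0" "y = of_int c / of_int d" using rat_frac_ex by blast
  have nz: "(of_int b :: 'k) \<noteq> 0" "(of_int d :: 'k) \<noteq> 0" using of_int_ne0[OF ch] x y by auto
  have "x + y = of_int (a * d + c * b) / of_int (b * d)" using x y by (simp add: field_simps)
  moreover have "b * d \<noteq> 0" using x y by simp
  ultimately have "(ratk (x + y) :: 'k) = of_int (a * d + c * b) / of_int (b * d)" using ratk_frac[OF ch] by metis
  also have "\<dots> = of_int a / of_int b + of_int c / of_int d" using nz by (simp add: field_simps)
  finally show "(ratk (x + y) :: 'k) = ratk x + ratk y" using ratk_frac[OF ch] x y by metis
  have "x * y = of_int (a * c) / of_int (b * d)" using x y by (simp add: field_simps)
  then have "(ratk (x * y) :: 'k) = of_int (a * c) / of_int (b * d)" using ratk_frac[OF ch] \<open>b * d \<noteq> 0\<close> by metis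
  also have "\<dots> = (of_int a / of_int b) * (of_int c / of_int d)" using nz by (simp add: field_simps)
  finally show "(ratk (x * y) :: 'k) = ratk x * ratk y" using ratk_frac[OF ch] x y by metis
next
  have "(1::rat) = of_int 1 / of_int 1" by simp
  then show "(ratk 1 :: 'k) = 1" using ratk_frac[OF ch, of 1 1] by simp
qed

lemma ratk_inj0:
  assumes ch: "CHAR('k::field) = 0" and z: "(ratk q :: 'k) = 0"
  shows "q = 0"
proof -
  obtain a b where q: "b \<noteq> 0" "q = of_int a / of_int b" using rat_frac_ex by blast
  have "(of_int a / of_int b :: 'k) = 0" using z ratk_frac[OF ch q(1)] q(2) by simp
  then have "(of_int a :: 'k) = 0" using of_int_ne0[OF ch q(1)] by simp
  then have "a = 0" by (rule of_int_inj0[OF ch])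
  then show ?thesis using q by simp
qed

lemma res_char0_unit:
  assumes av: "nonarch_abs av" and r: "res_char av = 0" and n: "n > 0"
  shows "av (of_nat n) = 1"
proof -
  have "\<not> (\<exists>n>0. av (of_nat n) < 1)"
  proof
    assume ex: "\<exists>n>0. av (of_nat n) < 1"
    then have "res_char av = (LEAST n. n > 0 \<and> av (of_nat n) < 1)" by (simp add: res_char_def)
    moreover have "(LEAST n. n > 0 \<and> av (of_nat n) < 1) > 0" using LeastI_ex[OF ex] by blast
    ultimately show False using r by simp
  qed
  then have "\<not> av (of_nat n) < 1" using n by blast
  then have "av (of_nat n) \<ge> 1" by simp
  then show ?thesis using av_of_nat_le[OF av, of n] by simp
qed

lemma ratk_bnd:
  assumes ch: "CHAR('k::field) = 0" and av: "nonarch_abs (av :: 'k \<Rightarrow> real)" and r: "res_char av = 0"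
  shows "av (ratk q) \<le> 1"
proof -
  obtain a b where q: "b \<noteq> 0" "q = of_int a / of_int b" using rat_frac_ex by blast
  have e: "(ratk q :: 'k) = of_int a / of_int b" using ratk_frac[OF ch q(1)] q(2) by simp
  have "av (of_int b :: 'k) = 1"
  proof (cases "b > 0")
    case True
    then have "(of_int b :: 'k) = of_nat (nat b)" by simp
    then show ?thesis using res_char0_unit[OF av r, of "nat b"] True by simp
  next
    case False
    then have "(of_int b :: 'k) = - of_nat (nat (- b))" by simp
    then show ?thesis using res_char0_unit[OF av r, of "nat (-b)"] False q(1) av_basic(6)[OF av] by simp
  qed
  moreover have "av (of_int a / of_int b :: 'k) * av (of_int b) = av (of_int a)"
    using av_basic(4)[OF av, of "of_int a / of_int b" "of_int b"] of_int_ne0[OF ch q(1)] by simp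
  ultimately show ?thesis unfolding e using av_of_int_le[OF av, of a] by simp
qed

section \<open>finite field embedding\<close>

lemma of_nat_eq_char_iff: "(of_nat x = (of_nat y :: 'c::ring_1)) \<longleftrightarrow> int CHAR('c) dvd (int x - int y)"
proof -
  have "(of_nat x = (of_nat y :: 'c)) \<longleftrightarrow> of_int (int x - int y) = (0::'c)" by simp
  also have "\<dots> \<longleftrightarrow> int CHAR('c) dvd (int x - int y)" by (rule of_int_eq_0_iff_char_dvd)
  finally show ?thesis .
qed

lemma of_nat_eq_transfer:
  assumes "CHAR('a::ring_1) = CHAR('b::ring_1)"
  shows "(of_nat x = (of_nat y :: 'a)) \<longleftrightarrow> (of_nat x = (of_nat y :: 'b))"
  using of_nat_eq_char_iff[where 'c='a, of x y] of_nat_eq_char_iff[where 'c='b, of x y] assms by simp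

lemma card_zero_finite:
  "of_nat (card (UNIV :: 'r::{ring_1,finite} set)) = (0::'r)"
proof -
  have inj: "inj (\<lambda>y::'r. y + 1)" by (auto simp: inj_def)
  have surj: "(\<lambda>y::'r. y + 1) ` UNIV = UNIV" by (metis diff_add_cancel surj_def)
  have r: "sum (\<lambda>y. y) ((\<lambda>y::'r. y + 1) ` UNIV) = sum (\<lambda>y. y + 1) UNIV"
    using sum.reindex[OF inj, of "\<lambda>y. y"] unfolding comp_def by assumption
  have "(\<Sum>y\<in>UNIV. y) = sum (\<lambda>y. y) ((\<lambda>y::'r. y + 1) ` UNIV)" unfolding surj ..
  also have "\<dots> = (\<Sum>y\<in>UNIV. y + 1)" by (rule r)
  also have "\<dots> = (\<Sum>y\<in>UNIV. y) + of_nat (card (UNIV :: 'r set))" by (simp add: sum.distrib)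
  finally show ?thesis by simp
qed

lemma finite_field_char:
  assumes pos: "CHAR('k::field) > 0" and c: "card (UNIV :: 'r::{field,finite} set) = CHAR('k)"
  shows "CHAR('r) = CHAR('k)"
proof -
  have pr: "prime CHAR('k)" by (rule prime_CHAR_semidom[OF pos])
  have "CHAR('r) dvd card (UNIV :: 'r set)" using card_zero_finite[where 'r='r] by (simp add: of_nat_eq_0_iff_char_dvd)
  then have "CHAR('r) dvd CHAR('k)" using c by simp
  then have "CHAR('r) = 1 \<or> CHAR('r) = CHAR('k)" using pr unfolding prime_nat_iff by blast
  moreover have "CHAR('r) \<noteq> Suc 0" by (rule CHAR_not_1')
  ultimately show ?thesis by auto
qed

lemma finite_field_surj:
  assumes pos: "CHAR('k::field) > 0" and c: "card (UNIV :: 'r::{field,finite} set) = CHAR('k)"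
  shows "\<exists>m. (of_nat m :: 'r) = r"
proof -
  let ?p = "CHAR('k)"
  have cr: "CHAR('r) = ?p" by (rule finite_field_char[OF pos c])
  have inj: "inj_on (of_nat :: nat \<Rightarrow> 'r) {0..<?p}"
  proof (rule inj_onI)
    fix x y assume xy: "x \<in> {0..<?p}" "y \<in> {0..<?p}" "(of_nat x :: 'r) = of_nat y"
    show "x = y"
    proof (rule ccontr)
      assume "x \<noteq> y"
      then consider "x < y" | "y < x" by linarith
      then show False
      proof cases
        case 1
        then have "CHAR('r) dvd (y - x)" using xy(3) of_nat_eq_iff_char_dvd[where 'a='r, OF 1] by simp
        then show False using 1 xy cr by (auto dest: dvd_imp_le)
      next
        case 2
        then have "CHAR('r) dvd (x - y)" using xy(3) of_nat_eq_iff_char_dvd[where 'a='r, OF 2] by simp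
        then show False using 2 xy cr by (auto dest: dvd_imp_le)
      qed
    qed
  qed
  have "card ((of_nat :: nat \<Rightarrow> 'r) ` {0..<?p}) = ?p" using card_image[OF inj] by simp
  then have "(of_nat :: nat \<Rightarrow> 'r) ` {0..<?p} = UNIV" using c by (intro card_subset_eq) auto
  then show ?thesis by (metis UNIV_I imageE)
qed

definition ffk :: "'r::{field,finite} \<Rightarrow> 'k::field" where
  "ffk r = of_nat (SOME m. (of_nat m :: 'r) = r)"

lemma ffk_of_nat:
  assumes pos: "CHAR('k::field) > 0" and c: "card (UNIV :: 'r::{field,finite} set) = CHAR('k)"
  shows "(ffk (of_nat m :: 'r) :: 'k) = of_nat m"
proof -
  have "(of_nat (SOME m'. (of_nat m' :: 'r) = of_nat m) :: 'r) = of_nat m" by (rule someI_ex) blast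
  then have "(of_nat (SOME m'. (of_nat m' :: 'r) = of_nat m) :: 'k) = of_nat m"
    using of_nat_eq_transfer[OF finite_field_char[OF pos c]] by blast
  then show ?thesis by (simp add: ffk_def)
qed

lemma ffk_props:
  assumes pos: "CHAR('k::field) > 0" and c: "card (UNIV :: 'r::{field,finite} set) = CHAR('k)"
  shows "rhom (ffk :: 'r \<Rightarrow> 'k)" "\<And>a::'r. (ffk a :: 'k) = 0 \<Longrightarrow> a = 0"
    "nonarch_abs (av :: 'k \<Rightarrow> real) \<Longrightarrow> av (ffk (a::'r)) \<le> 1"
proof -
  note sj = finite_field_surj[OF pos c]
  note fo = ffk_of_nat[OF pos c]
  note tr = of_nat_eq_transfer[OF finite_field_char[OF pos c]]
  show "rhom (ffk :: 'r \<Rightarrow> 'k)" unfolding rhom_def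
  proof (intro conjI allI)
    fix a b :: 'r
    obtain x y where "a = of_nat x" "b = of_nat y" using sj by metis
    then show "(ffk (a + b) :: 'k) = ffk a + ffk b" "(ffk (a * b) :: 'k) = ffk a * ffk b"
      using fo[of "x + y"] fo[of "x * y"] fo[of x] fo[of y] by simp_all
  next
    show "(ffk (1::'r) :: 'k) = 1" using fo[of 1] by simp
  qed
  show "a = 0" if z: "(ffk a :: 'k) = 0" for a :: 'r
  proof -
    obtain x where x: "a = of_nat x" using sj by metis
    then have "(of_nat x :: 'k) = of_nat 0" using z fo[of x] by simp
    then have "(of_nat x :: 'r) = of_nat 0" using tr by blast
    then show ?thesis using x by simp
  qed
  show "av (ffk a) \<le> 1" if av: "nonarch_abs av" for a :: 'r
  proof -
    obtain x where x: "a = of_nat x" using sj by metis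
    then show ?thesis using fo[of x] av_of_nat_le[OF av] by simp
  qed
qed

theorem proposition8p12:
  fixes av :: "'k::field \<Rightarrow> real" and G :: "('g, 'b) monoid_scheme" and n :: nat
  assumes "nonarch_abs av" and "group G"
  shows "(CHAR('k) > 0 \<and> card (UNIV :: 'r set) = CHAR('k) \<and> homology_fg TYPE('r::{field,finite}) G n
            \<longrightarrow> comparison_surj av G n) \<and>
         (CHAR('k) = 0 \<and> res_char av = 0 \<and> homology_fg TYPE(rat) G n
            \<longrightarrow> comparison_surj av G n) \<and>
         (CHAR('k) = 0 \<and> res_char av > 0 \<and> homology_fg TYPE(int) G n
            \<longrightarrow> comparison_surj av G n)"
proof (intro conjI impI)
  assume h: "CHAR('k) > 0 \<and> card (UNIV :: 'r set) = CHAR('k) \<and> homology_fg TYPE('r) G n"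
  show "comparison_surj av G n"
  proof (rule generic[where \<iota> = "ffk :: 'r \<Rightarrow> 'k"])
    show "nonarch_abs av" "group G" by fact+
    have h1: "CHAR('k) > 0" "card (UNIV :: 'r set) = CHAR('k)" using h by auto
    show "rhom (ffk :: 'r \<Rightarrow> 'k)" by (rule ffk_props(1)[OF h1])
    show "\<And>a::'r. (ffk a :: 'k) = 0 \<Longrightarrow> a = 0" by (rule ffk_props(2)[OF h1])
    show "\<And>r::'r. av (ffk r) \<le> 1" by (rule ffk_props(3)[OF h1 assms(1)])
    show "\<And>I::'r set. 0 \<in> I \<Longrightarrow> (\<And>a b. a \<in> I \<Longrightarrow> b \<in> I \<Longrightarrow> a + b \<in> I) \<Longrightarrow>
                 (\<And>r a. a \<in> I \<Longrightarrow> r * a \<in> I) \<Longrightarrow> \<exists>d\<in>I. \<forall>a\<in>I. d dvd a" by (rule field_PIP)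
    show "homology_fg TYPE('r) G n" using h by blast
  qed
next
  assume h: "CHAR('k) = 0 \<and> res_char av = 0 \<and> homology_fg TYPE(rat) G n"
  show "comparison_surj av G n"
  proof (rule generic[where \<iota> = "ratk :: rat \<Rightarrow> 'k"])
    show "nonarch_abs av" "group G" by fact+
    have h1: "CHAR('k) = 0" "res_char av = 0" using h by auto
    show "rhom (ratk :: rat \<Rightarrow> 'k)" by (rule rhom_ratk[OF h1(1)])
    show "\<And>a::rat. (ratk a :: 'k) = 0 \<Longrightarrow> a = 0" by (rule ratk_inj0[OF h1(1)])
    show "\<And>r::rat. av (ratk r) \<le> 1" by (rule ratk_bnd[OF h1(1) assms(1) h1(2)])
    show "\<And>I::rat set. 0 \<in> I \<Longrightarrow> (\<And>a b. a \<in> I \<Longrightarrow> b \<in> I \<Longrightarrow> a + b \<in> I) \<Longrightarrow>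
                 (\<And>r a. a \<in> I \<Longrightarrow> r * a \<in> I) \<Longrightarrow> \<exists>d\<in>I. \<forall>a\<in>I. d dvd a" by (rule field_PIP)
    show "homology_fg TYPE(rat) G n" using h by blast
  qed
next
  assume h: "CHAR('k) = 0 \<and> res_char av > 0 \<and> homology_fg TYPE(int) G n"
  show "comparison_surj av G n"
  proof (rule generic[where \<iota> = "of_int :: int \<Rightarrow> 'k"])
    show "nonarch_abs av" "group G" by fact+
    show "rhom (of_int :: int \<Rightarrow> 'k)" by (rule rhom_of_int)
    have h1: "CHAR('k) = 0" using h by auto
    show "\<And>a::int. (of_int a :: 'k) = 0 \<Longrightarrow> a = 0" by (rule of_int_inj0[OF h1])
    show "\<And>r::int. av (of_int r) \<le> 1" by (rule av_of_int_le[OF assms(1)])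
    show "\<And>I::int set. 0 \<in> I \<Longrightarrow> (\<And>a b. a \<in> I \<Longrightarrow> b \<in> I \<Longrightarrow> a + b \<in> I) \<Longrightarrow>
                 (\<And>r a. a \<in> I \<Longrightarrow> r * a \<in> I) \<Longrightarrow> \<exists>d\<in>I. \<forall>a\<in>I. d dvd a" by (rule int_PIP)
    show "homology_fg TYPE(int) G n" using h by blast
  qed
qed

end
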